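(* Let $G=(V,E)$ be a locally finite, connected graph with symmetric edge weights and a uniformly positive measure $\mu$. Let $\alpha,\beta>1$ and let $a,b:V\to\mathbb{R}$ satisfy conditions $(A_1)$ and $(A_2)$. Then for every $\lambda>0$ the system $$-\Delta u+(\lambda a(x)+1)u=\tfrac{\alpha}{\alpha+\beta}|u|^{\alpha-2}u|v|^{\beta},\qquad -\Delta v+(\lambda b(x)+1)v=\tfrac{\beta}{\alpha+\beta}|u|^{\alpha}|v|^{\beta-2}v\quad\text{in }V$$ has a ground state solution $(u_\lambda,v_\lambda)\in H_\lambda$, i.e. a weak solution with $(u_\lambda,v_\lambda)\in\mathcal N_\lambda$ and $J_\lambda(u_\lambda,v_\lambda)=c_{\mathcal N_\lambda}$.
   Context: $G=(V,E)$: $w_{xy}=w_{yx}>0$ for each edge $xy\in E$ (write $y\sim x$); $\mu:V\to(0,\infty)$ with $\mu(x)\ge\mu_{\min}>0$ for all $x$. For $u:V\to\mathbb{R}$: $\Delta u(x)=\frac1{\mu(x)}\sum_{y\sim x}w_{xy}(u(y)-u(x))$, $\Gamma(u,v)(x)=\frac1{2\mu(x)}\sum_{y\sim x}w_{xy}(u(y)-u(x))(v(y)-v(x))$, $|\nabla u|^2=\Gamma(u,u)$, $\int_V f\,d\mu=\sum_{x\in V}\mu(x)f(x)$. $d(x,y)$ is the graph distance; a set is a bounded domain if distances between its points are uniformly bounded. $W^{1,2}(V)=\{u:\int_V(|\nabla u|^2+u^2)d\mu<\infty\}$, $H=W^{1,2}(V)\times W^{1,2}(V)$ with $\|(u,v)\|_H^2=\int_V(|\nabla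 u|^2+|\nabla v|^2+u^2+v^2)d\mu$. $(A_1)$: $a\ge0$, $b\ge0$ on $V$, and $\Omega_a=\{a=0\}$, $\Omega_b=\{b=0\}$ and $\Omega_a\cap\Omega_b$ are non-empty bounded domains. $(A_2)$: there is $x_0\in V$ with $a(x)\to+\infty$ and $b(x)\to+\infty$ as $d(x,x_0)\to\infty$. For $\lambda>0$: $H_\lambda=\{(u,v)\in H:\int_V(\lambda a u^2+\lambda b v^2)d\mu<\infty\}$ with inner product $\langle(u,v),(\xi,\eta)\rangle_{H_\lambda}=\int_V(\Gamma(u,\xi)+(\lambda a+1)u\xi+\Gamma(v,\eta)+(\lambda b+1)v\eta)d\mu$ and norm $\|\cdot\|_{H_\lambda}$. $J_\lambda(u,v)=\frac12\|(u,v)\|_{H_\lambda}^2-\frac1{\alpha+\beta}\int_V|u|^\alpha|v|^\beta d\mu$. A weak solution is $(u,v)\in H_\lambda$ with $\int_V(\Gamma(u,\xi)+\Gamma(v,\eta)+(\lambda a+1)u\xi+(\lambda b+1)v\eta)d\mu=\int_V(\frac{\alpha}{\alpha+\beta}|u|^{\alpha-2}u|v|^\beta\xi+\frac{\beta}{\alpha+\beta}|u|^\alpha|v|^{\beta-2}v\eta)d\mu$ for all $(\xi,\eta)\in H_\lambda$ (i.e. $J_\lambda'(u,v)=0$). Nehari manifold $\mathcal N_\lambda=\{(u,v)\in H_\lambda\setminus\{(0,0)\}:\langle J_\lambda'(u,v),(u,v)\rangle=0\}$, $c_{\mathcal N_\lambda}=\inf_{\mathcal N_\lambda}J_\lambda$.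 *)

theory Defs
  imports "HOL-Analysis.Analysis"
begin

text \<open>Weighted graph on the vertex type 'v (V = UNIV). The edge xy exists iff w x y > 0.\<close>

definition adj :: "('v \<Rightarrow> 'v \<Rightarrow> real) \<Rightarrow> 'v \<Rightarrow> 'v \<Rightarrow> bool" where
  "adj w x y \<longleftrightarrow> w x y > 0"

definition nbrs :: "('v \<Rightarrow> 'v \<Rightarrow> real) \<Rightarrow> 'v \<Rightarrow> 'v set" where
  "nbrs w x = {y. adj w x y}"

definition weighted_graph :: "('v \<Rightarrow> 'v \<Rightarrow> real) \<Rightarrow> bool" where
  "weighted_graph w \<longleftrightarrow> (\<forall>x y. w x y \<ge> 0 \<and> w x y = w y x)"

definition locally_finite :: "('v \<Rightarrow> 'v \<Rightarrow> real) \<Rightarrow> bool" where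
  "locally_finite w \<longleftrightarrow> (\<forall>x. finite (nbrs w x))"

definition connected_graph :: "('v \<Rightarrow> 'v \<Rightarrow> real) \<Rightarrow> bool" where
  "connected_graph w \<longleftrightarrow> (\<forall>x y. (adj w)\<^sup>*\<^sup>* x y)"

definition graph_dist :: "('v \<Rightarrow> 'v \<Rightarrow> real) \<Rightarrow> 'v \<Rightarrow> 'v \<Rightarrow> nat" where
  "graph_dist w x y = (LEAST n. (adj w ^^ n) x y)"

definition bounded_domain :: "('v \<Rightarrow> 'v \<Rightarrow> real) \<Rightarrow> 'v set \<Rightarrow> bool" where
  "bounded_domain w S \<longleftrightarrow> (\<exists>R. \<forall>x\<in>S. \<forall>y\<in>S. graph_dist w x y \<le> R)"

definition laplacian :: "('v \<Rightarrow> 'v \<Rightarrow> real) \<Rightarrow> ('v \<Rightarrow> real) \<Rightarrow> ('v \<Rightarrow> real) \<Rightarrow> 'v \<Rightarrow> real" where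
  "laplacian w \<mu> u x = (1 / \<mu> x) * (\<Sum>y\<in>nbrs w x. w x y * (u y - u x))"

definition Gamma :: "('v \<Rightarrow> 'v \<Rightarrow> real) \<Rightarrow> ('v \<Rightarrow> real) \<Rightarrow> ('v \<Rightarrow> real) \<Rightarrow> ('v \<Rightarrow> real) \<Rightarrow> 'v \<Rightarrow> real" where
  "Gamma w \<mu> u v x = (1 / (2 * \<mu> x)) * (\<Sum>y\<in>nbrs w x. w x y * (u y - u x) * (v y - v x))"

definition grad_sq :: "('v \<Rightarrow> 'v \<Rightarrow> real) \<Rightarrow> ('v \<Rightarrow> real) \<Rightarrow> ('v \<Rightarrow> real) \<Rightarrow> 'v \<Rightarrow> real" where
  "grad_sq w \<mu> u = Gamma w \<mu> u u"

text \<open>Integration against \<mu>: \<open>\<Sum>x. \<mu>(x) f(x)\<close>, integrable = (absolutely) summable.\<close>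
definition mu_integrable :: "('v \<Rightarrow> real) \<Rightarrow> ('v \<Rightarrow> real) \<Rightarrow> bool" where
  "mu_integrable \<mu> f \<longleftrightarrow> (\<lambda>x. \<mu> x * f x) summable_on UNIV"

definition mu_integral :: "('v \<Rightarrow> real) \<Rightarrow> ('v \<Rightarrow> real) \<Rightarrow> real" where
  "mu_integral \<mu> f = infsum (\<lambda>x. \<mu> x * f x) UNIV"

definition W12 :: "('v \<Rightarrow> 'v \<Rightarrow> real) \<Rightarrow> ('v \<Rightarrow> real) \<Rightarrow> ('v \<Rightarrow> real) \<Rightarrow> bool" where
  "W12 w \<mu> u \<longleftrightarrow> mu_integrable \<mu> (\<lambda>x. grad_sq w \<mu> u x + (u x)\<^sup>2)"

definition H_lambda :: "('v \<Rightarrow> 'v \<Rightarrow> real) \<Rightarrow> ('v \<Rightarrow> real) \<Rightarrow> ('v \<Rightarrow> real) \<Rightarrow> ('v \<Rightarrow> real)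
    \<Rightarrow> real \<Rightarrow> (('v \<Rightarrow> real) \<times> ('v \<Rightarrow> real)) set" where
  "H_lambda w \<mu> a b lam = {(u, v). W12 w \<mu> u \<and> W12 w \<mu> v \<and>
      mu_integrable \<mu> (\<lambda>x. lam * a x * (u x)\<^sup>2 + lam * b x * (v x)\<^sup>2)}"

definition H_inner :: "('v \<Rightarrow> 'v \<Rightarrow> real) \<Rightarrow> ('v \<Rightarrow> real) \<Rightarrow> ('v \<Rightarrow> real) \<Rightarrow> ('v \<Rightarrow> real)
    \<Rightarrow> real \<Rightarrow> ('v \<Rightarrow> real) \<times> ('v \<Rightarrow> real) \<Rightarrow> ('v \<Rightarrow> real) \<times> ('v \<Rightarrow> real) \<Rightarrow> real" where
  "H_inner w \<mu> a b lam p q = (case p of (u, v) \<Rightarrow> case q of (\<xi>, \<eta>) \<Rightarrow>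
      mu_integral \<mu> (\<lambda>x. Gamma w \<mu> u \<xi> x + (lam * a x + 1) * u x * \<xi> x
                       + Gamma w \<mu> v \<eta> x + (lam * b x + 1) * v x * \<eta> x))"

definition H_norm_sq :: "('v \<Rightarrow> 'v \<Rightarrow> real) \<Rightarrow> ('v \<Rightarrow> real) \<Rightarrow> ('v \<Rightarrow> real) \<Rightarrow> ('v \<Rightarrow> real)
    \<Rightarrow> real \<Rightarrow> ('v \<Rightarrow> real) \<times> ('v \<Rightarrow> real) \<Rightarrow> real" where
  "H_norm_sq w \<mu> a b lam p = H_inner w \<mu> a b lam p p"

definition J_lambda :: "('v \<Rightarrow> 'v \<Rightarrow> real) \<Rightarrow> ('v \<Rightarrow> real) \<Rightarrow> ('v \<Rightarrow> real) \<Rightarrow> ('v \<Rightarrow> real)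
    \<Rightarrow> real \<Rightarrow> real \<Rightarrow> real \<Rightarrow> ('v \<Rightarrow> real) \<times> ('v \<Rightarrow> real) \<Rightarrow> real" where
  "J_lambda w \<mu> a b lam \<alpha> \<beta> p = (case p of (u, v) \<Rightarrow>
      H_norm_sq w \<mu> a b lam (u, v) / 2
      - (1 / (\<alpha> + \<beta>)) * mu_integral \<mu> (\<lambda>x. \<bar>u x\<bar> powr \<alpha> * \<bar>v x\<bar> powr \<beta>))"

text \<open>\<open>\<langle>J'(u,v),(\<xi>,\<eta>)\<rangle>\<close>; note \<open>|u|^{\<alpha>-2} u\<close> is read as 0 at u = 0 (0 powr _ = 0).\<close>
definition J_deriv :: "('v \<Rightarrow> 'v \<Rightarrow> real) \<Rightarrow> ('v \<Rightarrow> real) \<Rightarrow> ('v \<Rightarrow> real) \<Rightarrow> ('v \<Rightarrow> real)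
    \<Rightarrow> real \<Rightarrow> real \<Rightarrow> real \<Rightarrow> ('v \<Rightarrow> real) \<times> ('v \<Rightarrow> real) \<Rightarrow> ('v \<Rightarrow> real) \<times> ('v \<Rightarrow> real) \<Rightarrow> real" where
  "J_deriv w \<mu> a b lam \<alpha> \<beta> p q = (case p of (u, v) \<Rightarrow> case q of (\<xi>, \<eta>) \<Rightarrow>
      H_inner w \<mu> a b lam (u, v) (\<xi>, \<eta>)
      - mu_integral \<mu> (\<lambda>x. \<alpha> / (\<alpha> + \<beta>) * \<bar>u x\<bar> powr (\<alpha> - 2) * u x * \<bar>v x\<bar> powr \<beta> * \<xi> x
                       + \<beta> / (\<alpha> + \<beta>) * \<bar>u x\<bar> powr \<alpha> * \<bar>v x\<bar> powr (\<beta> - 2) * v x * \<eta> x))"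

definition weak_solution :: "('v \<Rightarrow> 'v \<Rightarrow> real) \<Rightarrow> ('v \<Rightarrow> real) \<Rightarrow> ('v \<Rightarrow> real) \<Rightarrow> ('v \<Rightarrow> real)
    \<Rightarrow> real \<Rightarrow> real \<Rightarrow> real \<Rightarrow> ('v \<Rightarrow> real) \<times> ('v \<Rightarrow> real) \<Rightarrow> bool" where
  "weak_solution w \<mu> a b lam \<alpha> \<beta> p \<longleftrightarrow> p \<in> H_lambda w \<mu> a b lam \<and>
      (\<forall>q\<in>H_lambda w \<mu> a b lam. J_deriv w \<mu> a b lam \<alpha> \<beta> p q = 0)"

definition nehari :: "('v \<Rightarrow> 'v \<Rightarrow> real) \<Rightarrow> ('v \<Rightarrow> real) \<Rightarrow> ('v \<Rightarrow> real) \<Rightarrow> ('v \<Rightarrow> real)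
    \<Rightarrow> real \<Rightarrow> real \<Rightarrow> real \<Rightarrow> (('v \<Rightarrow> real) \<times> ('v \<Rightarrow> real)) set" where
  "nehari w \<mu> a b lam \<alpha> \<beta> = {p \<in> H_lambda w \<mu> a b lam. p \<noteq> ((\<lambda>_. 0), (\<lambda>_. 0)) \<and>
      J_deriv w \<mu> a b lam \<alpha> \<beta> p p = 0}"

definition c_nehari :: "('v \<Rightarrow> 'v \<Rightarrow> real) \<Rightarrow> ('v \<Rightarrow> real) \<Rightarrow> ('v \<Rightarrow> real) \<Rightarrow> ('v \<Rightarrow> real)
    \<Rightarrow> real \<Rightarrow> real \<Rightarrow> real \<Rightarrow> real" where
  "c_nehari w \<mu> a b lam \<alpha> \<beta> = Inf (J_lambda w \<mu> a b lam \<alpha> \<beta> ` nehari w \<mu> a b lam \<alpha> \<beta>)"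

definition cond_A1 :: "('v \<Rightarrow> 'v \<Rightarrow> real) \<Rightarrow> ('v \<Rightarrow> real) \<Rightarrow> ('v \<Rightarrow> real) \<Rightarrow> bool" where
  "cond_A1 w a b \<longleftrightarrow> (\<forall>x. a x \<ge> 0 \<and> b x \<ge> 0) \<and>
     {x. a x = 0} \<noteq> {} \<and> bounded_domain w {x. a x = 0} \<and>
     {x. b x = 0} \<noteq> {} \<and> bounded_domain w {x. b x = 0} \<and>
     {x. a x = 0} \<inter> {x. b x = 0} \<noteq> {} \<and> bounded_domain w ({x. a x = 0} \<inter> {x. b x = 0})"

definition cond_A2 :: "('v \<Rightarrow> 'v \<Rightarrow> real) \<Rightarrow> ('v \<Rightarrow> real) \<Rightarrow> ('v \<Rightarrow> real) \<Rightarrow> bool" where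
  "cond_A2 w a b \<longleftrightarrow> (\<exists>x0. \<forall>M::real. \<exists>R::nat. \<forall>x. graph_dist w x x0 \<ge> R \<longrightarrow> a x \<ge> M \<and> b x \<ge> M)"

end

theory Submission
  imports Defs
begin
lemma powr_split_bound:
  fixes m L e k :: real
  assumes "0 \<le> m" "m \<le> L" "0 \<le> k" "k \<le> e"
  shows "m powr e \<le> L powr (e - k) * m powr k"
proof (cases "m = 0")
  case True then show ?thesis by simp
next
  case False
  then have mp: "m > 0" using assms by simp
  have "m powr e = m powr (e - k) * m powr k" by (simp add: powr_add[symmetric])
  also have "\<dots> \<le> L powr (e - k) * m powr k"
    by (intro mult_right_mono powr_mono2) (use assms mp in auto)
  finally show ?thesis .
qed

lemma powr_prod_bound:
  fixes A B m e1 e2 :: real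
  assumes "0 \<le> A" "A \<le> m" "0 \<le> B" "B \<le> m" "0 \<le> e1" "0 \<le> e2"
  shows "A powr e1 * B powr e2 \<le> m powr (e1 + e2)"
proof -
  have "A powr e1 * B powr e2 \<le> m powr e1 * m powr e2"
    by (intro mult_mono powr_mono2) (use assms in auto)
  also have "\<dots> = m powr (e1 + e2)" by (simp add: powr_add)
  finally show ?thesis .
qed

lemma powr_one': "0 \<le> (m::real) \<Longrightarrow> m powr 1 = m"
  by (cases "m = 0") auto

lemma powr_two': "0 \<le> (m::real) \<Longrightarrow> m powr 2 = m\<^sup>2"
  by (cases "m = 0") (auto simp: powr_numeral)

lemma abs_powr_sgn: "\<bar>\<bar>y\<bar> powr (e - 2) * y\<bar> = \<bar>y\<bar> powr (e - 1)" for y e :: real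
proof (cases "y = 0")
  case True then show ?thesis by simp
next
  case False
  have "\<bar>\<bar>y\<bar> powr (e - 2) * y\<bar> = \<bar>y\<bar> powr (e - 2) * \<bar>y\<bar> powr 1"
    by (simp add: abs_mult)
  also have "\<dots> = \<bar>y\<bar> powr (e - 2 + 1)" by (rule powr_add[symmetric])
  finally show ?thesis by simp
qed

lemma powr_sgn_mult: "\<bar>y\<bar> powr (e - 2) * y * y = \<bar>y\<bar> powr e" for y e :: real
proof (cases "y = 0")
  case True then show ?thesis by simp
next
  case False
  have "\<bar>y\<bar> powr (e - 2) * y * y = \<bar>y\<bar> powr (e - 2) * \<bar>y\<bar> powr 2"
    using False by (simp add: powr_two' power2_eq_square)
  also have "\<dots> = \<bar>y\<bar> powr (e - 2 + 2)" by (rule powr_add[symmetric])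
  finally show ?thesis by simp
qed


lemma DERIV_abs_powr_pos:
  fixes e y :: real assumes "e > 1" and 1: "y > 0"
  shows "((\<lambda>z. \<bar>z\<bar> powr e) has_real_derivative e * (\<bar>y\<bar> powr (e - 2) * y)) (at y)"
proof -
    have ev: "\<forall>\<^sub>F z in nhds y. z powr e = \<bar>z\<bar> powr e"
      using eventually_nhds_in_open[of "{0<..}" y] 1 by (auto elim!: eventually_mono)
    have "((\<lambda>z. z powr e) has_real_derivative e * y powr (e - 1)) (at y)"
      using 1 by (rule has_real_derivative_powr)
    moreover have "e * y powr (e - 1) = e * (\<bar>y\<bar> powr (e - 2) * y)"
      using 1 abs_powr_sgn[of y e] by simp
    ultimately show ?thesis
      using DERIV_cong_ev[OF refl ev refl] by simp
  
qed

lemma DERIV_abs_powr_neg: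
  fixes e y :: real assumes "e > 1" and 2: "y < 0"
  shows "((\<lambda>z. \<bar>z\<bar> powr e) has_real_derivative e * (\<bar>y\<bar> powr (e - 2) * y)) (at y)"
proof -
    have ev: "\<forall>\<^sub>F z in nhds y. (-z) powr e = \<bar>z\<bar> powr e"
      using eventually_nhds_in_open[of "{..<0}" y] 2 by (auto elim!: eventually_mono)
    have d0: "((\<lambda>z. (-z) powr e) has_real_derivative e * (-y) powr (e - of_nat 1) * (-1)) (at y)"
    proof (rule DERIV_fun_powr)
      show "((\<lambda>z. -z) has_real_derivative -1) (at y)" by (rule DERIV_minus[OF DERIV_ident, simplified])
    qed (use 2 in simp)
    then have d: "((\<lambda>z. (-z) powr e) has_real_derivative e * (-y) powr (e - 1) * (-1)) (at y)"
      by simp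
    have h1: "\<bar>y\<bar> powr (e - 2) * \<bar>y\<bar> = \<bar>y\<bar> powr (e - 1)"
      using abs_powr_sgn[of y e] by (simp add: abs_mult)
    have h2: "\<bar>y\<bar> powr (e - 2) * y = - (\<bar>y\<bar> powr (e - 2) * \<bar>y\<bar>)"
      using 2 by simp
    have h: "\<bar>y\<bar> powr (e - 2) * y = - (\<bar>y\<bar> powr (e - 1))" using h1 h2 by linarith
    have a: "(-y) powr (e - 1) = \<bar>y\<bar> powr (e - 1)" using 2 by (simp add: abs_of_neg)
    have eq: "e * (-y) powr (e - 1) * (-1) = e * (\<bar>y\<bar> powr (e - 2) * y)"
      unfolding a h by simp
    have "((\<lambda>z. \<bar>z\<bar> powr e) has_real_derivative e * (-y) powr (e - 1) * (-1)) (at y)"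
      using DERIV_cong_ev[OF refl ev refl, THEN iffD1, OF d] .
    then show ?thesis unfolding eq .
  
qed

lemma DERIV_abs_powr_zero:
  fixes e y :: real assumes "e > 1" and 3: "y = 0"
  shows "((\<lambda>z. \<bar>z\<bar> powr e) has_real_derivative e * (\<bar>y\<bar> powr (e - 2) * y)) (at y)"
proof -
  have lim: "((\<lambda>h. \<bar>h\<bar> powr (e - 1)) \<longlongrightarrow> 0) (at 0)"
  proof -
    have t: "((\<lambda>h. \<bar>h\<bar>) \<longlongrightarrow> \<bar>0::real\<bar>) (at 0)"
      by (rule tendsto_rabs[OF tendsto_ident_at])
    have "((\<lambda>h. \<bar>h\<bar> powr (e - 1)) \<longlongrightarrow> \<bar>0::real\<bar> powr (e - 1)) (at 0)"
      by (rule tendsto_powr2[OF t tendsto_const]) (use assms in auto)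
    then show ?thesis by simp
  qed
  have eq: "\<bar>(\<bar>h\<bar> powr e) / h\<bar> = \<bar>h\<bar> powr (e - 1)" for h :: real
  proof (cases "h = 0")
    case True then show ?thesis using assms by simp
  next
    case False
    have "\<bar>(\<bar>h\<bar> powr e) / h\<bar> = \<bar>h\<bar> powr e / \<bar>h\<bar> powr 1"
      using False by (simp add: abs_divide)
    also have "\<dots> = \<bar>h\<bar> powr (e - 1)" by (rule powr_diff[symmetric])
    finally show ?thesis .
  qed
  have feq: "(\<lambda>h. \<bar>(\<bar>h\<bar> powr e) / h\<bar>) = (\<lambda>h. \<bar>h\<bar> powr (e - 1))"
    by (rule ext) (rule eq)
  have "((\<lambda>h. \<bar>(\<bar>h\<bar> powr e) / h\<bar>) \<longlongrightarrow> 0) (at 0)" unfolding feq by (rule lim)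
  then have "((\<lambda>h. (\<bar>h\<bar> powr e) / h) \<longlongrightarrow> 0) (at 0)"
    by (rule tendsto_rabs_zero_iff[THEN iffD1])
  then show ?thesis using 3 by (simp add: DERIV_def)
qed

lemma DERIV_abs_powr:
  fixes e y :: real
  assumes "e > 1"
  shows "((\<lambda>z. \<bar>z\<bar> powr e) has_real_derivative e * (\<bar>y\<bar> powr (e - 2) * y)) (at y)"
proof -
  consider "y > 0" | "y < 0" | "y = 0" by linarith
  then show ?thesis
    using DERIV_abs_powr_pos[OF assms] DERIV_abs_powr_neg[OF assms] DERIV_abs_powr_zero[OF assms]
    by cases blast+
qed

lemma infsum_split_finite:
  fixes h :: "'b \<Rightarrow> real"
  assumes "h summable_on UNIV" "finite S"
  shows "infsum h UNIV = sum h S + infsum h (-S)"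
proof -
  have "infsum h (S \<union> -S) = infsum h S + infsum h (-S)"
    by (rule infsum_Un_disjoint) (auto intro: summable_on_subset[OF assms(1)] simp: assms(2))
  then show ?thesis using assms(2) by simp
qed

lemma abs_infsum_le:
  fixes h :: "'b \<Rightarrow> real"
  assumes "h summable_on A"
  shows "\<bar>infsum h A\<bar> \<le> infsum (\<lambda>x. \<bar>h x\<bar>) A"
proof -
  have "(\<lambda>x. norm (h x)) summable_on A" using assms summable_on_iff_abs_summable_on_real by blast
  then have "norm (infsum h A) \<le> infsum (\<lambda>x. norm (h x)) A" by (rule norm_infsum_bound)
  then show ?thesis by simp
qed

lemma abs_summable_real:
  fixes h :: "'b \<Rightarrow> real"
  assumes "h summable_on A"
  shows "(\<lambda>x. \<bar>h x\<bar>) summable_on A"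
proof -
  have "(\<lambda>x. norm (h x)) summable_on A" using assms summable_on_iff_abs_summable_on_real by blast
  then show ?thesis by simp
qed

lemma infsum_tail_tendsto:
  fixes f :: "'a \<Rightarrow> 'b \<Rightarrow> real" and g :: "'b \<Rightarrow> real"
  assumes fs: "\<forall>\<^sub>F s in F. f s summable_on UNIV"
    and gs: "g summable_on UNIV"
    and pw: "\<And>x. ((\<lambda>s. f s x) \<longlongrightarrow> g x) F"
    and tail: "\<And>\<epsilon>. \<epsilon> > 0 \<Longrightarrow> \<exists>S. finite S \<and> (\<forall>\<^sub>F s in F. infsum (\<lambda>x. \<bar>f s x\<bar>) (-S) \<le> \<epsilon>)
                  \<and> infsum (\<lambda>x. \<bar>g x\<bar>) (-S) \<le> \<epsilon>"
  shows "((\<lambda>s. infsum (f s) UNIV) \<longlongrightarrow> infsum g UNIV) F"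
proof (rule tendstoI)
  fix e :: real assume e: "e > 0"
  obtain S where S: "finite S" and tf: "\<forall>\<^sub>F s in F. infsum (\<lambda>x. \<bar>f s x\<bar>) (-S) \<le> e/3"
    and tg: "infsum (\<lambda>x. \<bar>g x\<bar>) (-S) \<le> e/3"
    using tail[of "e/3"] e by auto
  have "((\<lambda>s. \<Sum>x\<in>S. f s x) \<longlongrightarrow> (\<Sum>x\<in>S. g x)) F"
    by (rule tendsto_sum) (rule pw)
  then have ts: "\<forall>\<^sub>F s in F. dist (\<Sum>x\<in>S. f s x) (\<Sum>x\<in>S. g x) < e/3"
    using e by (intro tendstoD) auto
  have gsplit: "infsum g UNIV = sum g S + infsum g (-S)" by (rule infsum_split_finite[OF gs S])
  have gt: "\<bar>infsum g (-S)\<bar> \<le> e/3"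
    using abs_infsum_le[OF summable_on_subset[OF gs, of "-S"]] tg by simp
  show "\<forall>\<^sub>F s in F. dist (infsum (f s) UNIV) (infsum g UNIV) < e"
    using fs tf ts
  proof eventually_elim
    case (elim s)
    have fsplit: "infsum (f s) UNIV = sum (f s) S + infsum (f s) (-S)"
      by (rule infsum_split_finite[OF elim(1) S])
    have ft: "\<bar>infsum (f s) (-S)\<bar> \<le> e/3"
      using abs_infsum_le[OF summable_on_subset[OF elim(1), of "-S"]] elim(2) by simp
    have "\<bar>sum (f s) S - sum g S\<bar> < e/3" using elim(3) by (simp add: dist_real_def)
    then show ?case using fsplit gsplit ft gt unfolding dist_real_def abs_less_iff abs_le_iff
      by linarith
  qed
qed

lemma infsum_dominated_tendsto:
  fixes f :: "'a \<Rightarrow> 'b \<Rightarrow> real" and g d :: "'b \<Rightarrow> real"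
  assumes F: "F \<noteq> bot"
    and dom: "\<forall>\<^sub>F s in F. \<forall>x. \<bar>f s x\<bar> \<le> d x"
    and ds: "d summable_on UNIV"
    and pw: "\<And>x. ((\<lambda>s. f s x) \<longlongrightarrow> g x) F"
  shows "((\<lambda>s. infsum (f s) UNIV) \<longlongrightarrow> infsum g UNIV) F"
proof -
  have gd: "\<bar>g x\<bar> \<le> d x" for x
  proof (rule tendsto_le[OF F tendsto_const])
    show "((\<lambda>s. \<bar>f s x\<bar>) \<longlongrightarrow> \<bar>g x\<bar>) F" by (rule tendsto_rabs[OF pw])
    show "\<forall>\<^sub>F s in F. \<bar>f s x\<bar> \<le> d x" using dom by eventually_elim auto
  qed
  have dnn: "d x \<ge> 0" for x using gd[of x] by linarith
  have dabs: "(\<lambda>x. norm (d x)) summable_on UNIV" using ds summable_on_iff_abs_summable_on_real by blast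
  have sumdom: "h summable_on UNIV" if "\<And>x. \<bar>h x\<bar> \<le> d x" for h :: "'b \<Rightarrow> real"
  proof -
    have "(\<lambda>x. norm (h x)) summable_on UNIV"
      by (rule Infinite_Sum.abs_summable_on_comparison_test[OF dabs]) (use that dnn in auto)
    then show ?thesis using summable_on_iff_abs_summable_on_real by blast
  qed
  show ?thesis
  proof (rule infsum_tail_tendsto)
    show "\<forall>\<^sub>F s in F. f s summable_on UNIV" using dom by eventually_elim (rule sumdom, auto)
    show "g summable_on UNIV" by (rule sumdom) (rule gd)
    show "((\<lambda>s. f s x) \<longlongrightarrow> g x) F" for x by (rule pw)
  next
    fix \<epsilon> :: real assume \<epsilon>: "\<epsilon> > 0"
    obtain S where S: "finite S" "dist (sum d S) (infsum d UNIV) \<le> \<epsilon>"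
      using infsum_finite_approximation[OF ds \<epsilon>] by auto
    have dt: "infsum d (-S) \<le> \<epsilon>"
      using infsum_split_finite[OF ds S(1)] S(2) by (simp add: dist_real_def)
    have dsS: "d summable_on (-S)" by (rule summable_on_subset[OF ds]) auto
    have le: "infsum (\<lambda>x. \<bar>h x\<bar>) (-S) \<le> \<epsilon>" if "\<And>x. \<bar>h x\<bar> \<le> d x" for h :: "'b \<Rightarrow> real"
    proof -
      have "(\<lambda>x. \<bar>h x\<bar>) summable_on (-S)"
        by (rule summable_on_subset[OF abs_summable_real[OF sumdom[OF that]]]) auto
      then have "infsum (\<lambda>x. \<bar>h x\<bar>) (-S) \<le> infsum d (-S)"
        by (rule infsum_mono[OF _ dsS]) (rule that)
      then show ?thesis using dt by linarith
    qed
    show "\<exists>S. finite S \<and> (\<forall>\<^sub>F s in F. infsum (\<lambda>x. \<bar>f s x\<bar>) (-S) \<le> \<epsilon>)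
                  \<and> infsum (\<lambda>x. \<bar>g x\<bar>) (-S) \<le> \<epsilon>"
    proof (intro exI conjI)
      show "finite S" by (rule S)
      show "\<forall>\<^sub>F s in F. infsum (\<lambda>x. \<bar>f s x\<bar>) (-S) \<le> \<epsilon>"
        using dom by eventually_elim (rule le, auto)
      show "infsum (\<lambda>x. \<bar>g x\<bar>) (-S) \<le> \<epsilon>" by (rule le) (rule gd)
    qed
  qed
qed

lemma pointwise_convergent_subseq:
  fixes f :: "nat \<Rightarrow> 'v \<Rightarrow> real"
  assumes cnt: "countable (UNIV :: 'v set)" and bnd: "\<And>n x. \<bar>f n x\<bar> \<le> K"
  shows "\<exists>r l. strict_mono r \<and> (\<forall>x. (\<lambda>n. f (r n) x) \<longlonglongrightarrow> l x)"
proof -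
  define g :: "nat \<Rightarrow> 'v" where "g = from_nat_into UNIV"
  have surjg: "range g = UNIV" unfolding g_def by (rule range_from_nat_into) (auto simp: cnt)
  define FF :: "nat \<Rightarrow> nat \<Rightarrow> real" where "FF n = (\<lambda>i. f n (g i))" for n
  define S :: "(nat \<Rightarrow> real) set" where "S = PiE UNIV (\<lambda>_. cball 0 K)"
  have inS: "FF n \<in> S" for n
    unfolding S_def FF_def using bnd by (auto simp: PiE_iff dist_real_def)
  have "compactin (product_topology (\<lambda>_. euclidean) UNIV) S"
    unfolding S_def compactin_PiE by (simp add: compactin_euclidean_iff)
  then have "compact S" by (simp add: euclidean_product_topology compactin_euclidean_iff)
  then have "seq_compact S" by (rule compact_imp_seq_compact)
  then obtain l r where lr: "l \<in> S" "strict_mono r" "(FF \<circ> r) \<longlonglongrightarrow> l"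
    using inS by (metis seq_compactE)
  have comp: "(\<lambda>n. FF (r n) i) \<longlonglongrightarrow> l i" for i
  proof -
    have "((\<lambda>n. (\<lambda>x. x i) ((FF \<circ> r) n)) \<longlongrightarrow> (\<lambda>x. x i) l) sequentially"
      by (rule continuous_on_tendsto_compose[OF continuous_on_product_coordinates lr(3)]) auto
    then show ?thesis by simp
  qed
  define L where "L x = l (SOME i. g i = x)" for x
  have "(\<lambda>n. f (r n) x) \<longlonglongrightarrow> L x" for x
  proof -
    have ex: "\<exists>i. g i = x" using surjg by (metis UNIV_I image_iff)
    have gi: "g (SOME i. g i = x) = x" using someI_ex[OF ex] .
    show ?thesis using comp[of "SOME i. g i = x"] unfolding L_def FF_def gi .
  qed
  then show ?thesis using lr(2) by blast
qed

lemma Gamma_lin2: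
  "Gamma w \<mu> u (\<lambda>y. \<xi> y + s * \<eta> y) x = Gamma w \<mu> u \<xi> x + s * Gamma w \<mu> u \<eta> x"
proof -
  have "(\<Sum>y\<in>nbrs w x. w x y * (u y - u x) * (\<xi> y + s * \<eta> y - (\<xi> x + s * \<eta> x)))
     = (\<Sum>y\<in>nbrs w x. w x y * (u y - u x) * (\<xi> y - \<xi> x)) + s * (\<Sum>y\<in>nbrs w x. w x y * (u y - u x) * (\<eta> y - \<eta> x))"
  proof -
    have e: "w x y * (u y - u x) * (\<xi> y + s * \<eta> y - (\<xi> x + s * \<eta> x))
        = w x y * (u y - u x) * (\<xi> y - \<xi> x) + s * (w x y * (u y - u x) * (\<eta> y - \<eta> x))" for y
      by (simp add: algebra_simps)
    show ?thesis unfolding e by (simp add: sum.distrib sum_distrib_left)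
  qed
  then show ?thesis unfolding Gamma_def by (simp add: algebra_simps)
qed

lemma Gamma_sym: "Gamma w \<mu> u v x = Gamma w \<mu> v u x"
  unfolding Gamma_def by (simp add: mult_ac)

lemma Gamma_lin1:
  "Gamma w \<mu> (\<lambda>y. \<xi> y + s * \<eta> y) u x = Gamma w \<mu> \<xi> u x + s * Gamma w \<mu> \<eta> u x"
  using Gamma_lin2[of w \<mu> u \<xi> s \<eta> x] by (simp add: Gamma_sym)

lemma Gamma_scale1: "Gamma w \<mu> (\<lambda>y. c * u y) v x = c * Gamma w \<mu> u v x"
  using Gamma_lin1[of w \<mu> "\<lambda>_. 0" c u v x] by (simp add: Gamma_def)

lemma Gamma_scale2: "Gamma w \<mu> v (\<lambda>y. c * u y) x = c * Gamma w \<mu> v u x"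
  using Gamma_scale1[of w \<mu> c u v x] by (simp add: Gamma_sym)

lemma Gamma_zero1: "Gamma w \<mu> (\<lambda>y. 0) v x = 0"
  by (simp add: Gamma_def)

lemma Gamma_nonneg:
  assumes "\<And>y. w x y \<ge> 0" "\<mu> x > 0"
  shows "Gamma w \<mu> u u x \<ge> 0"
proof -
  have "0 \<le> w x y * (u y - u x) * (u y - u x)" for y
    using assms by (metis mult.assoc mult_nonneg_nonneg zero_le_square)
  then have "0 \<le> (\<Sum>y\<in>nbrs w x. w x y * (u y - u x) * (u y - u x))" by (rule sum_nonneg)
  then show ?thesis unfolding Gamma_def using assms by simp
qed

lemma sum_norm_real: "f summable_on A \<Longrightarrow> (\<lambda>x. norm (f x)) summable_on A" for f :: "'a \<Rightarrow> real"
  by (rule summable_on_iff_abs_summable_on_real[THEN iffD1])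

lemma norm_sum_real: "(\<lambda>x. norm (f x)) summable_on A \<Longrightarrow> f summable_on A" for f :: "'a \<Rightarrow> real"
  by (rule summable_on_iff_abs_summable_on_real[THEN iffD2])

locale gsetup =
  fixes w :: "'v \<Rightarrow> 'v \<Rightarrow> real" and \<mu> a b :: "'v \<Rightarrow> real" and lam \<alpha> \<beta> m0 :: real
  assumes wg: "weighted_graph w" and lf: "locally_finite w" and conn: "connected_graph w"
    and m0pos: "m0 > 0" and m0le: "\<And>x. m0 \<le> \<mu> x"
    and al: "\<alpha> > 1" and be: "\<beta> > 1"
    and anonneg: "\<And>x. a x \<ge> 0" and bnonneg: "\<And>x. b x \<ge> 0"
    and A2: "cond_A2 w a b" and lam: "lam > 0"
begin

definition IP :: "('v \<Rightarrow> real) \<times> ('v \<Rightarrow> real) \<Rightarrow> ('v \<Rightarrow> real) \<times> ('v \<Rightarrow> real) \<Rightarrow> 'v \<Rightarrow> real" where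
  "IP p q x = Gamma w \<mu> (fst p) (fst q) x + (lam * a x + 1) * fst p x * fst q x
     + Gamma w \<mu> (snd p) (snd q) x + (lam * b x + 1) * snd p x * snd q x"

definition pl :: "('v \<Rightarrow> real) \<times> ('v \<Rightarrow> real) \<Rightarrow> real \<Rightarrow> ('v \<Rightarrow> real) \<times> ('v \<Rightarrow> real) \<Rightarrow> ('v \<Rightarrow> real) \<times> ('v \<Rightarrow> real)" where
  "pl p s q = ((\<lambda>y. fst p y + s * fst q y), (\<lambda>y. snd p y + s * snd q y))"

definition sc :: "real \<Rightarrow> ('v \<Rightarrow> real) \<times> ('v \<Rightarrow> real) \<Rightarrow> ('v \<Rightarrow> real) \<times> ('v \<Rightarrow> real)" where
  "sc t p = ((\<lambda>y. t * fst p y), (\<lambda>y. t * snd p y))"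

definition N :: "('v \<Rightarrow> real) \<times> ('v \<Rightarrow> real) \<Rightarrow> real" where
  "N p = H_norm_sq w \<mu> a b lam p"

definition P :: "('v \<Rightarrow> real) \<times> ('v \<Rightarrow> real) \<Rightarrow> 'v \<Rightarrow> real" where
  "P p x = \<bar>fst p x\<bar> powr \<alpha> * \<bar>snd p x\<bar> powr \<beta>"

definition Bf :: "('v \<Rightarrow> real) \<times> ('v \<Rightarrow> real) \<Rightarrow> real" where
  "Bf p = infsum (\<lambda>x. \<mu> x * P p x) UNIV"

definition Hs :: "('v \<Rightarrow> real) \<times> ('v \<Rightarrow> real) \<Rightarrow> bool" where
  "Hs p \<longleftrightarrow> (\<lambda>x. \<mu> x * IP p p x) summable_on UNIV"

lemma mupos: "\<mu> x > 0" using m0pos m0le[of x] by linarith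

lemma wnn: "w x y \<ge> 0" using wg unfolding weighted_graph_def by auto

lemma wsym: "w x y = w y x" using wg unfolding weighted_graph_def by auto

lemma H_inner_eq: "H_inner w \<mu> a b lam p q = infsum (\<lambda>x. \<mu> x * IP p q x) UNIV"
  by (cases p; cases q) (simp add: H_inner_def mu_integral_def IP_def)

lemma N_eq: "N p = infsum (\<lambda>x. \<mu> x * IP p p x) UNIV"
  unfolding N_def H_norm_sq_def by (rule H_inner_eq)

lemma IP_sym: "IP p q x = IP q p x"
  unfolding IP_def by (simp add: Gamma_sym mult_ac)

lemma IP_pl1: "IP (pl p s q) r x = IP p r x + s * IP q r x"
  unfolding IP_def pl_def by (simp add: Gamma_lin1 algebra_simps)

lemma IP_pl2: "IP r (pl p s q) x = IP r p x + s * IP r q x"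
  using IP_pl1[of p s q r x] by (simp add: IP_sym)

lemma IP_expand: "IP (pl p s q) (pl p s q) x = IP p p x + 2 * s * IP p q x + s\<^sup>2 * IP q q x"
  unfolding IP_pl1 IP_pl2 by (simp add: IP_sym[of q p] algebra_simps power2_eq_square)

lemma IP_sc: "IP (sc t p) (sc t p) x = t\<^sup>2 * IP p p x"
  unfolding IP_def sc_def by (simp add: Gamma_scale1 Gamma_scale2 algebra_simps power2_eq_square)

lemma IP_ge_sq: "IP p p x \<ge> (fst p x)\<^sup>2 + (snd p x)\<^sup>2"
proof -
  have g1: "Gamma w \<mu> (fst p) (fst p) x \<ge> 0" by (rule Gamma_nonneg) (auto simp: wnn mupos)
  have g2: "Gamma w \<mu> (snd p) (snd p) x \<ge> 0" by (rule Gamma_nonneg) (auto simp: wnn mupos)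
  have "lam * a x * (fst p x)\<^sup>2 \<ge> 0" using lam anonneg[of x] by simp
  moreover have "lam * b x * (snd p x)\<^sup>2 \<ge> 0" using lam bnonneg[of x] by simp
  ultimately show ?thesis using g1 g2 unfolding IP_def by (simp add: algebra_simps power2_eq_square)
qed

lemma IP_nonneg: "IP p p x \<ge> 0"
  using IP_ge_sq[of p x] by (smt (verit) zero_le_power2)

lemma IP_decomp: "IP p p x = (Gamma w \<mu> (fst p) (fst p) x + (fst p x)\<^sup>2) + (Gamma w \<mu> (snd p) (snd p) x + (snd p x)\<^sup>2)
    + (lam * a x * (fst p x)\<^sup>2 + lam * b x * (snd p x)\<^sup>2)"
  unfolding IP_def by (simp add: algebra_simps power2_eq_square)

lemma IP_ge_ab: "IP p p x \<ge> lam * a x * (fst p x)\<^sup>2 + lam * b x * (snd p x)\<^sup>2"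
proof -
  have g1: "Gamma w \<mu> (fst p) (fst p) x \<ge> 0" by (rule Gamma_nonneg) (auto simp: wnn mupos)
  have g2: "Gamma w \<mu> (snd p) (snd p) x \<ge> 0" by (rule Gamma_nonneg) (auto simp: wnn mupos)
  show ?thesis unfolding IP_decomp using g1 g2 by (smt (verit) zero_le_power2)
qed

lemma IP_CS: "2 * \<bar>IP p q x\<bar> \<le> IP p p x + IP q q x"
proof -
  have "IP (pl p 1 q) (pl p 1 q) x \<ge> 0" by (rule IP_nonneg)
  moreover have "IP (pl p (-1) q) (pl p (-1) q) x \<ge> 0" by (rule IP_nonneg)
  ultimately show ?thesis unfolding IP_expand by (simp add: abs_le_iff)
qed

lemma mu_IP_nonneg: "\<mu> x * IP p p x \<ge> 0"
  using mupos[of x] IP_nonneg[of p x] by simp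

lemma H_iff: "p \<in> H_lambda w \<mu> a b lam \<longleftrightarrow> Hs p"
proof -
  obtain u v where p: "p = (u, v)" by (cases p)
  define f1 where "f1 x = \<mu> x * (grad_sq w \<mu> u x + (u x)\<^sup>2)" for x
  define f2 where "f2 x = \<mu> x * (grad_sq w \<mu> v x + (v x)\<^sup>2)" for x
  define f3 where "f3 x = \<mu> x * (lam * a x * (u x)\<^sup>2 + lam * b x * (v x)\<^sup>2)" for x
  have sum: "\<mu> x * IP p p x = f1 x + f2 x + f3 x" for x
    unfolding f1_def f2_def f3_def p IP_decomp grad_sq_def by (simp add: algebra_simps)
  have nn1: "f1 x \<ge> 0" for x unfolding f1_def grad_sq_def
    using Gamma_nonneg[of w x \<mu> u] mupos[of x] wnn by simp
  have nn2: "f2 x \<ge> 0" for x unfolding f2_def grad_sq_def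
    using Gamma_nonneg[of w x \<mu> v] mupos[of x] wnn by simp
  have nn3: "f3 x \<ge> 0" for x unfolding f3_def
    using mupos[of x] lam anonneg[of x] bnonneg[of x] by simp
  have "p \<in> H_lambda w \<mu> a b lam \<longleftrightarrow> f1 summable_on UNIV \<and> f2 summable_on UNIV \<and> f3 summable_on UNIV"
    unfolding p H_lambda_def W12_def mu_integrable_def f1_def f2_def f3_def by simp
  also have "\<dots> \<longleftrightarrow> Hs p"
  proof
    assume "f1 summable_on UNIV \<and> f2 summable_on UNIV \<and> f3 summable_on UNIV"
    then have "(\<lambda>x. f1 x + f2 x + f3 x) summable_on UNIV"
      by (intro summable_on_add) auto
    then show "Hs p" unfolding Hs_def sum .
  next
    assume "Hs p"
    then have s: "(\<lambda>x. f1 x + f2 x + f3 x) summable_on UNIV" unfolding Hs_def sum .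
    show "f1 summable_on UNIV \<and> f2 summable_on UNIV \<and> f3 summable_on UNIV"
    proof (intro conjI)
      show "f1 summable_on UNIV"
        by (rule summable_on_comparison_test[OF s]) (use nn1 nn2 nn3 in \<open>auto simp: add_nonneg_nonneg\<close>)
      show "f2 summable_on UNIV"
        by (rule summable_on_comparison_test[OF s]) (use nn1 nn2 nn3 in \<open>auto simp: add_nonneg_nonneg\<close>)
      show "f3 summable_on UNIV"
        by (rule summable_on_comparison_test[OF s]) (use nn1 nn2 nn3 in \<open>auto simp: add_nonneg_nonneg\<close>)
    qed
  qed
  finally show ?thesis .
qed

lemma IP_summable:
  assumes "Hs p" "Hs q"
  shows "(\<lambda>x. \<mu> x * IP p q x) summable_on UNIV"
proof -
  have s: "(\<lambda>x. \<mu> x * IP p p x + \<mu> x * IP q q x) summable_on UNIV"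
    using assms unfolding Hs_def by (rule summable_on_add)
  then have sn: "(\<lambda>x. norm (\<mu> x * IP p p x + \<mu> x * IP q q x)) summable_on UNIV"
    by (rule sum_norm_real)
  have "(\<lambda>x. norm (\<mu> x * IP p q x)) summable_on UNIV"
  proof (rule Infinite_Sum.abs_summable_on_comparison_test[OF sn])
    fix x
    have h: "\<bar>IP p q x\<bar> \<le> IP p p x + IP q q x"
      using IP_CS[of p q x] by linarith
    have "norm (\<mu> x * IP p q x) = \<mu> x * \<bar>IP p q x\<bar>"
      using mupos[of x] by (simp add: abs_mult)
    also have "\<dots> \<le> \<mu> x * (IP p p x + IP q q x)"
      by (rule mult_left_mono[OF h]) (use mupos[of x] in simp)
    also have "\<dots> = \<mu> x * IP p p x + \<mu> x * IP q q x" by (simp add: distrib_left)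
    also have "\<dots> \<le> norm (\<mu> x * IP p p x + \<mu> x * IP q q x)" by simp
    finally show "norm (\<mu> x * IP p q x) \<le> norm (\<mu> x * IP p p x + \<mu> x * IP q q x)" .
  qed
  then show ?thesis by (rule norm_sum_real)
qed

lemma Hs_pl:
  assumes "Hs p" "Hs q"
  shows "Hs (pl p s q)"
    and "N (pl p s q) = N p + 2 * s * H_inner w \<mu> a b lam p q + s\<^sup>2 * N q"
proof -
  have e: "\<mu> x * IP (pl p s q) (pl p s q) x = \<mu> x * IP p p x + (2 * s) * (\<mu> x * IP p q x) + s\<^sup>2 * (\<mu> x * IP q q x)" for x
    unfolding IP_expand by (simp add: algebra_simps)
  have s1: "(\<lambda>x. \<mu> x * IP p p x) summable_on UNIV" using assms(1) unfolding Hs_def .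
  have s2: "(\<lambda>x. (2 * s) * (\<mu> x * IP p q x)) summable_on UNIV"
    by (rule summable_on_cmult_right[OF IP_summable[OF assms]])
  have s3: "(\<lambda>x. s\<^sup>2 * (\<mu> x * IP q q x)) summable_on UNIV"
    using assms(2) unfolding Hs_def by (rule summable_on_cmult_right)
  have s12: "(\<lambda>x. \<mu> x * IP p p x + (2 * s) * (\<mu> x * IP p q x)) summable_on UNIV"
    by (rule summable_on_add[OF s1 s2])
  show "Hs (pl p s q)" unfolding Hs_def e by (rule summable_on_add[OF s12 s3])
  have "N (pl p s q) = infsum (\<lambda>x. \<mu> x * IP p p x + (2 * s) * (\<mu> x * IP p q x)) UNIV + infsum (\<lambda>x. s\<^sup>2 * (\<mu> x * IP q q x)) UNIV"
    unfolding N_eq e by (rule infsum_add[OF s12 s3])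
  also have "\<dots> = N p + 2 * s * H_inner w \<mu> a b lam p q + s\<^sup>2 * N q"
    unfolding infsum_add[OF s1 s2] N_eq H_inner_eq
    using infsum_cmult_right[of "2 * s" "\<lambda>x. \<mu> x * IP p q x" UNIV] IP_summable[OF assms]
      infsum_cmult_right[of "s\<^sup>2" "\<lambda>x. \<mu> x * IP q q x" UNIV] s3 assms(2)
    unfolding Hs_def by simp
  finally show "N (pl p s q) = N p + 2 * s * H_inner w \<mu> a b lam p q + s\<^sup>2 * N q" .
qed

lemma Hs_sc:
  assumes "Hs p"
  shows "Hs (sc t p)" and "N (sc t p) = t\<^sup>2 * N p"
proof -
  have e: "\<mu> x * IP (sc t p) (sc t p) x = t\<^sup>2 * (\<mu> x * IP p p x)" for x
    unfolding IP_sc by simp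
  show "Hs (sc t p)" unfolding Hs_def e using assms unfolding Hs_def by (rule summable_on_cmult_right)
  show "N (sc t p) = t\<^sup>2 * N p" unfolding N_eq e by (rule infsum_cmult_right) (use assms Hs_def in auto)
qed

lemma N_nonneg: "N p \<ge> 0"
  unfolding N_eq by (rule infsum_nonneg) (rule mu_IP_nonneg)

lemma term_le_N:
  assumes "Hs p"
  shows "\<mu> x * IP p p x \<le> N p"
proof -
  have "sum (\<lambda>x. \<mu> x * IP p p x) {x} \<le> infsum (\<lambda>x. \<mu> x * IP p p x) UNIV"
    by (rule finite_sum_le_infsum) (use assms Hs_def mu_IP_nonneg in auto)
  then show ?thesis unfolding N_eq by simp
qed

lemma pt_bound:
  assumes "Hs p"
  shows "m0 * (fst p x)\<^sup>2 \<le> N p" and "m0 * (snd p x)\<^sup>2 \<le> N p"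
proof -
  have "m0 * ((fst p x)\<^sup>2 + (snd p x)\<^sup>2) \<le> \<mu> x * IP p p x"
    by (rule mult_mono[OF m0le IP_ge_sq]) (use mupos[of x] in auto)
  then have "m0 * ((fst p x)\<^sup>2 + (snd p x)\<^sup>2) \<le> N p" using term_le_N[OF assms, of x] by linarith
  moreover have "m0 * (fst p x)\<^sup>2 \<ge> 0" "m0 * (snd p x)\<^sup>2 \<ge> 0" using m0pos by auto
  ultimately show "m0 * (fst p x)\<^sup>2 \<le> N p" and "m0 * (snd p x)\<^sup>2 \<le> N p"
    by (simp_all add: algebra_simps)
qed

lemma abs_bound:
  assumes "Hs p"
  shows "\<bar>fst p x\<bar> \<le> sqrt (N p / m0)" and "\<bar>snd p x\<bar> \<le> sqrt (N p / m0)"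
proof -
  have "(fst p x)\<^sup>2 \<le> N p / m0" using pt_bound(1)[OF assms, of x] m0pos by (simp add: field_simps)
  then show "\<bar>fst p x\<bar> \<le> sqrt (N p / m0)" using real_le_rsqrt by (metis real_sqrt_abs real_sqrt_le_mono)
  have "(snd p x)\<^sup>2 \<le> N p / m0" using pt_bound(2)[OF assms, of x] m0pos by (simp add: field_simps)
  then show "\<bar>snd p x\<bar> \<le> sqrt (N p / m0)" by (metis real_sqrt_abs real_sqrt_le_mono)
qed

end

lemma pow_sq_bound:
  fixes s t L \<alpha> \<beta> :: real
  assumes "\<bar>s\<bar> \<le> L" "\<bar>t\<bar> \<le> L" "\<alpha> > 1" "\<beta> > 1"
  shows "\<bar>s\<bar> powr \<alpha> * \<bar>t\<bar> powr \<beta> \<le> L powr (\<alpha> + \<beta> - 2) * (s\<^sup>2 + t\<^sup>2)"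
proof -
  define m where "m = max \<bar>s\<bar> \<bar>t\<bar>"
  have m: "0 \<le> m" "\<bar>s\<bar> \<le> m" "\<bar>t\<bar> \<le> m" "m \<le> L" using assms unfolding m_def by auto
  have "\<bar>s\<bar> powr \<alpha> * \<bar>t\<bar> powr \<beta> \<le> m powr (\<alpha> + \<beta>)"
    by (rule powr_prod_bound) (use m assms in auto)
  also have "\<dots> \<le> L powr (\<alpha> + \<beta> - 2) * m powr 2"
    by (rule powr_split_bound) (use m assms in auto)
  also have "m powr 2 = m\<^sup>2" by (rule powr_two'[OF m(1)])
  also have "m\<^sup>2 \<le> s\<^sup>2 + t\<^sup>2" unfolding m_def by (cases "\<bar>s\<bar> \<le> \<bar>t\<bar>") (auto simp: max_def)
  then have "L powr (\<alpha> + \<beta> - 2) * m\<^sup>2 \<le> L powr (\<alpha> + \<beta> - 2) * (s\<^sup>2 + t\<^sup>2)"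
    by (rule mult_left_mono) simp
  finally show ?thesis .
qed

context gsetup begin

abbreviation z0 :: "('v \<Rightarrow> real) \<times> ('v \<Rightarrow> real)" where "z0 \<equiv> ((\<lambda>_. 0), (\<lambda>_. 0))"

lemma P_nonneg: "P p x \<ge> 0" unfolding P_def by simp

lemma P_bound:
  assumes "Hs p"
  shows "\<mu> x * P p x \<le> sqrt (N p / m0) powr (\<alpha> + \<beta> - 2) * (\<mu> x * IP p p x)"
proof -
  let ?L = "sqrt (N p / m0)"
  have "P p x \<le> ?L powr (\<alpha> + \<beta> - 2) * ((fst p x)\<^sup>2 + (snd p x)\<^sup>2)"
    unfolding P_def by (rule pow_sq_bound) (use abs_bound[OF assms] al be in auto)
  also have "\<dots> \<le> ?L powr (\<alpha> + \<beta> - 2) * IP p p x"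
    by (rule mult_left_mono[OF IP_ge_sq]) simp
  finally have "\<mu> x * P p x \<le> \<mu> x * (?L powr (\<alpha> + \<beta> - 2) * IP p p x)"
    by (rule mult_left_mono) (use mupos[of x] in simp)
  then show ?thesis by (simp add: mult_ac)
qed

lemma P_summable:
  assumes "Hs p"
  shows "(\<lambda>x. \<mu> x * P p x) summable_on UNIV"
proof (rule summable_on_comparison_test)
  show "(\<lambda>x. sqrt (N p / m0) powr (\<alpha> + \<beta> - 2) * (\<mu> x * IP p p x)) summable_on UNIV"
    using assms unfolding Hs_def by (rule summable_on_cmult_right)
  show "\<mu> x * P p x \<le> sqrt (N p / m0) powr (\<alpha> + \<beta> - 2) * (\<mu> x * IP p p x)" for x
    by (rule P_bound[OF assms])
  show "0 \<le> \<mu> x * P p x" for x using mupos[of x] P_nonneg[of p x] by simp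
qed

lemma Bf_bound:
  assumes "Hs p"
  shows "Bf p \<le> sqrt (N p / m0) powr (\<alpha> + \<beta> - 2) * N p"
proof -
  have "Bf p \<le> infsum (\<lambda>x. sqrt (N p / m0) powr (\<alpha> + \<beta> - 2) * (\<mu> x * IP p p x)) UNIV"
    unfolding Bf_def
    by (rule infsum_mono[OF P_summable[OF assms]])
      (use assms P_bound in \<open>auto simp: Hs_def intro: summable_on_cmult_right\<close>)
  also have "\<dots> = sqrt (N p / m0) powr (\<alpha> + \<beta> - 2) * N p"
    unfolding N_eq by (rule infsum_cmult_right) (use assms Hs_def in auto)
  finally show ?thesis .
qed

lemma Bf_nonneg: "Bf p \<ge> 0"
proof -
  have "0 \<le> \<mu> x * P p x" for x using mupos[of x] P_nonneg[of p x] by simp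
  then show ?thesis unfolding Bf_def by (rule infsum_nonneg)
qed

lemma J_deriv_self: "J_deriv w \<mu> a b lam \<alpha> \<beta> p p = N p - Bf p"
proof -
  obtain u v where p: "p = (u, v)" by (cases p)
  have e: "\<alpha> / (\<alpha> + \<beta>) * \<bar>u x\<bar> powr (\<alpha> - 2) * u x * \<bar>v x\<bar> powr \<beta> * u x
         + \<beta> / (\<alpha> + \<beta>) * \<bar>u x\<bar> powr \<alpha> * \<bar>v x\<bar> powr (\<beta> - 2) * v x * v x
       = P (u, v) x" for x
  proof -
    have "\<alpha> / (\<alpha> + \<beta>) * \<bar>u x\<bar> powr (\<alpha> - 2) * u x * \<bar>v x\<bar> powr \<beta> * u x
         + \<beta> / (\<alpha> + \<beta>) * \<bar>u x\<bar> powr \<alpha> * \<bar>v x\<bar> powr (\<beta> - 2) * v x * v x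
        = \<alpha> / (\<alpha> + \<beta>) * (\<bar>u x\<bar> powr (\<alpha> - 2) * u x * u x) * \<bar>v x\<bar> powr \<beta>
         + \<beta> / (\<alpha> + \<beta>) * \<bar>u x\<bar> powr \<alpha> * (\<bar>v x\<bar> powr (\<beta> - 2) * v x * v x)"
      by (simp add: mult_ac)
    also have "\<dots> = (\<alpha> / (\<alpha> + \<beta>) + \<beta> / (\<alpha> + \<beta>)) * (\<bar>u x\<bar> powr \<alpha> * \<bar>v x\<bar> powr \<beta>)"
      unfolding powr_sgn_mult by (simp add: algebra_simps)
    also have "\<alpha> / (\<alpha> + \<beta>) + \<beta> / (\<alpha> + \<beta>) = 1" using al be by (simp add: add_divide_distrib[symmetric])
    finally show ?thesis unfolding P_def by simp
  qed
  have "J_deriv w \<mu> a b lam \<alpha> \<beta> (u, v) (u, v) = N (u, v) - Bf (u, v)"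
    unfolding J_deriv_def prod.case e mu_integral_def N_def H_norm_sq_def Bf_def ..
  then show ?thesis using p by simp
qed

lemma J_eq: "J_lambda w \<mu> a b lam \<alpha> \<beta> p = N p / 2 - Bf p / (\<alpha> + \<beta>)"
  by (cases p) (simp add: J_lambda_def N_def Bf_def P_def mu_integral_def)

lemma P_sc: "P (sc t p) x = \<bar>t\<bar> powr (\<alpha> + \<beta>) * P p x"
  unfolding P_def sc_def by (simp add: abs_mult powr_mult powr_add mult_ac)

lemma Bf_sc: "Bf (sc t p) = \<bar>t\<bar> powr (\<alpha> + \<beta>) * Bf p"
proof -
  have "Bf (sc t p) = infsum (\<lambda>x. \<bar>t\<bar> powr (\<alpha> + \<beta>) * (\<mu> x * P p x)) UNIV"
    unfolding Bf_def P_sc by (simp add: mult_ac)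
  also have "\<dots> = \<bar>t\<bar> powr (\<alpha> + \<beta>) * Bf p"
    unfolding Bf_def by (rule infsum_cmult_right') 
  finally show ?thesis .
qed

lemma nehari_iff: "p \<in> nehari w \<mu> a b lam \<alpha> \<beta> \<longleftrightarrow> Hs p \<and> p \<noteq> z0 \<and> N p = Bf p"
  unfolding nehari_def using H_iff J_deriv_self by auto

lemma N_pos:
  assumes "Hs p" "p \<noteq> z0"
  shows "N p > 0"
proof -
  obtain x where "fst p x \<noteq> 0 \<or> snd p x \<noteq> 0"
    using assms(2) by (metis prod.collapse ext)
  then show ?thesis
  proof
    assume h: "fst p x \<noteq> 0"
    have "m0 * (fst p x)\<^sup>2 > 0" using h m0pos by simp
    then show ?thesis using pt_bound(1)[OF assms(1), of x] by linarith
  next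
    assume h: "snd p x \<noteq> 0"
    have "m0 * (snd p x)\<^sup>2 > 0" using h m0pos by simp
    then show ?thesis using pt_bound(2)[OF assms(1), of x] by linarith
  qed
qed

lemma Bf_pos_nz:
  assumes "Bf p > 0"
  shows "p \<noteq> z0"
proof
  assume "p = z0"
  then have "Bf p = 0" unfolding Bf_def P_def using al be by simp
  with assms show False by simp
qed

lemma nehari_N_ge:
  assumes "p \<in> nehari w \<mu> a b lam \<alpha> \<beta>"
  shows "N p \<ge> m0"
proof (rule ccontr)
  assume "\<not> N p \<ge> m0"
  then have lt: "N p < m0" by simp
  have hs: "Hs p" and nz: "p \<noteq> z0" and eq: "N p = Bf p" using assms nehari_iff by auto
  have Np: "N p > 0" by (rule N_pos[OF hs nz])
  have "sqrt (N p / m0) < 1" using lt Np m0pos by simp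
  then have "sqrt (N p / m0) powr (\<alpha> + \<beta> - 2) < 1 powr (\<alpha> + \<beta> - 2)"
    by (intro powr_less_mono2) (use al be Np m0pos in auto)
  then have "sqrt (N p / m0) powr (\<alpha> + \<beta> - 2) * N p < N p" using Np by simp
  then show False using Bf_bound[OF hs] eq by linarith
qed

lemma projection:
  assumes hs: "Hs p" and Bp: "Bf p > 0"
  defines "t \<equiv> (N p / Bf p) powr (1 / (\<alpha> + \<beta> - 2))"
  shows "t > 0" and "sc t p \<in> nehari w \<mu> a b lam \<alpha> \<beta>"
    and "J_lambda w \<mu> a b lam \<alpha> \<beta> (sc t p) = (1/2 - 1/(\<alpha> + \<beta>)) * (t\<^sup>2 * N p)"
proof -
  have Np: "N p > 0" by (rule N_pos[OF hs Bf_pos_nz[OF Bp]])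
  show tp: "t > 0" unfolding t_def using Np Bp by simp
  have tg: "t powr (\<alpha> + \<beta> - 2) = N p / Bf p"
    unfolding t_def powr_powr using al be Np Bp by simp
  have tpow: "\<bar>t\<bar> powr (\<alpha> + \<beta>) = t\<^sup>2 * t powr (\<alpha> + \<beta> - 2)"
  proof -
    have "\<bar>t\<bar> powr (\<alpha> + \<beta>) = t powr (2 + (\<alpha> + \<beta> - 2))" using tp by simp
    also have "\<dots> = t powr 2 * t powr (\<alpha> + \<beta> - 2)" by (rule powr_add)
    also have "t powr 2 = t\<^sup>2" using powr_two'[of t] tp by simp
    finally show ?thesis .
  qed
  have Bsc: "Bf (sc t p) = t\<^sup>2 * N p"
    unfolding Bf_sc tpow tg using Bp by simp
  have Nsc: "N (sc t p) = t\<^sup>2 * N p" by (rule Hs_sc(2)[OF hs])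
  have "Bf (sc t p) > 0" unfolding Bsc using tp Np by simp
  then show "sc t p \<in> nehari w \<mu> a b lam \<alpha> \<beta>"
    unfolding nehari_iff using Hs_sc(1)[OF hs] Bsc Nsc Bf_pos_nz by auto
  show "J_lambda w \<mu> a b lam \<alpha> \<beta> (sc t p) = (1/2 - 1/(\<alpha> + \<beta>)) * (t\<^sup>2 * N p)"
    unfolding J_eq Bsc Nsc by (simp add: algebra_simps)
qed

lemma J_nehari:
  assumes "p \<in> nehari w \<mu> a b lam \<alpha> \<beta>"
  shows "J_lambda w \<mu> a b lam \<alpha> \<beta> p = (1/2 - 1/(\<alpha> + \<beta>)) * N p"
  using assms unfolding nehari_iff J_eq by (simp add: algebra_simps)

end

context gsetup begin

lemma muP_nonneg: "0 \<le> \<mu> x * P p x"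
  using mupos[of x] P_nonneg[of p x] by simp

lemma adj_sym: "adj w x y \<longleftrightarrow> adj w y x"
  unfolding adj_def using wsym by simp

lemma finite_pow: "finite {x. (adj w ^^ n) x y}"
proof (induction n arbitrary: y)
  case 0
  then show ?case by simp
next
  case (Suc n)
  have "{x. (adj w ^^ Suc n) x y} \<subseteq> (\<Union>z\<in>nbrs w y. {x. (adj w ^^ n) x z})"
  proof
    fix x assume "x \<in> {x. (adj w ^^ Suc n) x y}"
    then obtain z where "(adj w ^^ n) x z" "adj w z y" by auto
    then show "x \<in> (\<Union>z\<in>nbrs w y. {x. (adj w ^^ n) x z})"
      unfolding nbrs_def using adj_sym by auto
  qed
  moreover have "finite (\<Union>z\<in>nbrs w y. {x. (adj w ^^ n) x z})"
    using lf Suc.IH unfolding locally_finite_def by auto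
  ultimately show ?case by (rule finite_subset)
qed

lemma reach: "\<exists>n. (adj w ^^ n) x y"
  using conn unfolding connected_graph_def rtranclp_power by blast

lemma dist_reach: "(adj w ^^ graph_dist w x y) x y"
  unfolding graph_dist_def by (rule LeastI_ex[OF reach])

lemma countable_V: "countable (UNIV :: 'v set)"
proof -
  define x0 :: 'v where "x0 = undefined"
  have "UNIV \<subseteq> (\<Union>n. {x. (adj w ^^ n) x x0})" using reach by blast
  moreover have "countable (\<Union>n. {x. (adj w ^^ n) x x0})"
  proof (rule countable_UN)
    show "countable (UNIV :: nat set)" by simp
    show "countable {x. (adj w ^^ n) x x0}" for n by (rule countable_finite[OF finite_pow])
  qed
  ultimately show ?thesis by (rule countable_subset)
qed

lemma finite_low: "finite {x. a x < M \<or> b x < M}"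
proof -
  obtain x0 where x0: "\<forall>M::real. \<exists>R::nat. \<forall>x. graph_dist w x x0 \<ge> R \<longrightarrow> a x \<ge> M \<and> b x \<ge> M"
    using A2 unfolding cond_A2_def by blast
  obtain R :: nat where R: "\<And>x. graph_dist w x x0 \<ge> R \<Longrightarrow> a x \<ge> M \<and> b x \<ge> M" using x0 by blast
  have "{x. a x < M \<or> b x < M} \<subseteq> (\<Union>n<R. {x. (adj w ^^ n) x x0})"
  proof
    fix x assume "x \<in> {x. a x < M \<or> b x < M}"
    then have "\<not> R \<le> graph_dist w x x0" using R[of x] by auto
    then have "graph_dist w x x0 < R" by simp
    then show "x \<in> (\<Union>n<R. {x. (adj w ^^ n) x x0})" using dist_reach[of x x0] by blast
  qed
  moreover have "finite (\<Union>n<R. {x. (adj w ^^ n) x x0})" using finite_pow by auto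
  ultimately show ?thesis by (rule finite_subset)
qed

lemma nehari_nonempty: "nehari w \<mu> a b lam \<alpha> \<beta> \<noteq> {}"
proof -
  define x1 :: 'v where "x1 = undefined"
  define e where "e y = (if y = x1 then 1 else (0::real))" for y
  define p where "p = (e, e)"
  have zero: "\<mu> x * IP p p x = 0" if x: "x \<notin> insert x1 (nbrs w x1)" for x
  proof -
    have ex: "e x = 0" using x unfolding e_def by auto
    have "e y = 0" if "y \<in> nbrs w x" for y
    proof -
      have "y \<noteq> x1"
      proof
        assume "y = x1"
        then have "adj w x x1" using that unfolding nbrs_def by simp
        then have "x \<in> nbrs w x1" using adj_sym unfolding nbrs_def by simp
        then show False using x by simp
      qed
      then show ?thesis unfolding e_def by simp
    qed
    then have "Gamma w \<mu> e e x = 0" unfolding Gamma_def using ex by simp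
    then show ?thesis unfolding IP_def p_def using ex by simp
  qed
  have hs: "Hs p" unfolding Hs_def
  proof (rule finite_nonzero_values_imp_summable_on)
    have "{x \<in> UNIV. \<mu> x * IP p p x \<noteq> 0} \<subseteq> insert x1 (nbrs w x1)" using zero by blast
    moreover have "finite (insert x1 (nbrs w x1))" using lf unfolding locally_finite_def by simp
    ultimately show "finite {x \<in> UNIV. \<mu> x * IP p p x \<noteq> 0}" by (rule finite_subset)
  qed
  have "sum (\<lambda>x. \<mu> x * P p x) {x1} \<le> Bf p"
    unfolding Bf_def
    by (rule finite_sum_le_infsum[OF P_summable[OF hs]])
      (auto simp: muP_nonneg)
  moreover have "P p x1 = 1" unfolding P_def p_def e_def by simp
  ultimately have "Bf p > 0" using mupos[of x1] by simp
  then show ?thesis using projection(2)[OF hs] by blast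
qed

end

context gsetup begin

lemma tail_bound:
  assumes hs: "Hs h" and bd: "\<And>x. \<bar>fst h x\<bar> \<le> L \<and> \<bar>snd h x\<bar> \<le> L" and M: "M > 0"
  shows "infsum (\<lambda>x. \<bar>\<mu> x * P h x\<bar>) (- {x. a x < M \<or> b x < M}) \<le> L powr (\<alpha> + \<beta> - 2) / (lam * M) * N h"
proof -
  let ?S = "{x. a x < M \<or> b x < M}"
  let ?c = "L powr (\<alpha> + \<beta> - 2) / (lam * M)"
  have pt: "\<bar>\<mu> x * P h x\<bar> \<le> ?c * (\<mu> x * IP h h x)" if x: "x \<in> -?S" for x
  proof -
    have ax: "a x \<ge> M" "b x \<ge> M" using x by auto
    have "P h x \<le> L powr (\<alpha> + \<beta> - 2) * ((fst h x)\<^sup>2 + (snd h x)\<^sup>2)"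
      unfolding P_def by (rule pow_sq_bound) (use bd al be in auto)
    also have "(fst h x)\<^sup>2 + (snd h x)\<^sup>2 \<le> (lam * a x * (fst h x)\<^sup>2 + lam * b x * (snd h x)\<^sup>2) / (lam * M)"
    proof -
      have h1: "lam * M * (fst h x)\<^sup>2 \<le> lam * a x * (fst h x)\<^sup>2"
        using ax lam by (intro mult_right_mono mult_left_mono) auto
      have h2: "lam * M * (snd h x)\<^sup>2 \<le> lam * b x * (snd h x)\<^sup>2"
        using ax lam by (intro mult_right_mono mult_left_mono) auto
      have tot: "((fst h x)\<^sup>2 + (snd h x)\<^sup>2) * (lam * M) \<le> lam * a x * (fst h x)\<^sup>2 + lam * b x * (snd h x)\<^sup>2"
        using add_mono[OF h1 h2] by (simp add: algebra_simps)
      show ?thesis by (subst pos_le_divide_eq) (use lam M tot in auto)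
    qed
    also have "\<dots> \<le> IP h h x / (lam * M)"
      by (rule divide_right_mono[OF IP_ge_ab]) (use lam M in simp)
    finally have "P h x \<le> L powr (\<alpha> + \<beta> - 2) * (IP h h x / (lam * M))"
      by (simp add: mult_left_mono)
    then have "\<mu> x * P h x \<le> \<mu> x * (L powr (\<alpha> + \<beta> - 2) * (IP h h x / (lam * M)))"
      by (rule mult_left_mono) (use mupos[of x] in simp)
    moreover have "\<bar>\<mu> x * P h x\<bar> = \<mu> x * P h x" using muP_nonneg[of x h] by simp
    ultimately show ?thesis by (simp add: field_simps)
  qed
  have s1: "(\<lambda>x. \<bar>\<mu> x * P h x\<bar>) summable_on -?S"
    by (rule summable_on_subset[OF abs_summable_real[OF P_summable[OF hs]]]) auto
  have s2: "(\<lambda>x. ?c * (\<mu> x * IP h h x)) summable_on -?S"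
    by (rule summable_on_subset[OF summable_on_cmult_right]) (use hs Hs_def in auto)
  have "infsum (\<lambda>x. \<bar>\<mu> x * P h x\<bar>) (-?S) \<le> infsum (\<lambda>x. ?c * (\<mu> x * IP h h x)) (-?S)"
    by (rule infsum_mono[OF s1 s2 pt])
  also have "\<dots> = ?c * infsum (\<lambda>x. \<mu> x * IP h h x) (-?S)"
    by (rule infsum_cmult_right') 
  also have "infsum (\<lambda>x. \<mu> x * IP h h x) (-?S) \<le> N h"
  proof -
    have hsU: "(\<lambda>x. \<mu> x * IP h h x) summable_on UNIV" using hs Hs_def by simp
    have "(\<lambda>x. \<mu> x * IP h h x) summable_on (-?S)" by (rule summable_on_subset[OF hsU]) auto
    then show ?thesis unfolding N_eq
      by (rule infsum_mono_neutral[OF _ hsU]) (auto simp: mu_IP_nonneg)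
  qed
  then have "?c * infsum (\<lambda>x. \<mu> x * IP h h x) (-?S) \<le> ?c * N h"
    by (rule mult_left_mono) (use lam M in simp)
  finally show ?thesis .
qed

end

context gsetup begin

abbreviation Jv where "Jv \<equiv> J_lambda w \<mu> a b lam \<alpha> \<beta>"
abbreviation NE where "NE \<equiv> nehari w \<mu> a b lam \<alpha> \<beta>"

lemma exists_minimizer: "\<exists>p. p \<in> NE \<and> Jv p = c_nehari w \<mu> a b lam \<alpha> \<beta>"
proof -
  define \<kappa> where "\<kappa> = 1/2 - 1/(\<alpha> + \<beta>)"
  have \<kappa>pos: "\<kappa> > 0" unfolding \<kappa>_def using al be by (simp add: field_simps)
  define c where "c = c_nehari w \<mu> a b lam \<alpha> \<beta>"
  have Sne: "Jv ` NE \<noteq> {}" using nehari_nonempty by simp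
  have Jk: "Jv p = \<kappa> * N p" if "p \<in> NE" for p using J_nehari[OF that] unfolding \<kappa>_def .
  have Jge: "Jv p \<ge> \<kappa> * m0" if "p \<in> NE" for p
    using Jk[OF that] nehari_N_ge[OF that] \<kappa>pos by simp
  have bdd: "bdd_below (Jv ` NE)" using Jge by (intro bdd_belowI2) auto
  have c_lower: "c \<le> Jv p" if "p \<in> NE" for p
    unfolding c_def c_nehari_def by (rule cInf_lower) (use that bdd in auto)
  have c_ge: "c \<ge> \<kappa> * m0"
    unfolding c_def c_nehari_def by (rule cInf_greatest[OF Sne]) (use Jge in auto)
  have ex: "\<exists>p\<in>NE. Jv p < c + 1 / (real n + 1)" for n :: nat
  proof -
    have "Inf (Jv ` NE) < c + 1 / (real n + 1)" unfolding c_def c_nehari_def by simp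
    then show ?thesis using cInf_less_iff[OF Sne bdd] by auto
  qed
  obtain ps where ps: "\<And>n. ps n \<in> NE" "\<And>n. Jv (ps n) < c + 1 / (real n + 1)"
    using ex by metis
  define Nb where "Nb = (c + 1) / \<kappa>"
  have hsps: "Hs (ps n)" for n using ps(1) nehari_iff by auto
  have Nps: "N (ps n) \<le> Nb" for n
  proof -
    have "Jv (ps n) \<le> c + 1" using ps(2)[of n] by (smt (verit) divide_le_eq_1 of_nat_0_le_iff)
    then show ?thesis unfolding Nb_def using Jk[OF ps(1)] \<kappa>pos by (simp add: field_simps)
  qed
  define L where "L = sqrt (Nb / m0)"
  have bnd: "\<bar>fst (ps n) x\<bar> \<le> L \<and> \<bar>snd (ps n) x\<bar> \<le> L" for n x
  proof -
    have "sqrt (N (ps n) / m0) \<le> L" unfolding L_def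
      by (rule real_sqrt_le_mono, rule divide_right_mono) (use Nps m0pos in auto)
    then show ?thesis using abs_bound[OF hsps, of n x] by auto
  qed
  obtain r1 u where r1: "strict_mono r1" "\<forall>x. (\<lambda>n. fst (ps (r1 n)) x) \<longlonglongrightarrow> u x"
    using pointwise_convergent_subseq[OF countable_V, of "\<lambda>n. fst (ps n)" L] bnd by auto
  obtain r2 v where r2: "strict_mono r2" "\<forall>x. (\<lambda>n. snd (ps (r1 (r2 n))) x) \<longlonglongrightarrow> v x"
    using pointwise_convergent_subseq[OF countable_V, of "\<lambda>n. snd (ps (r1 n))" L] bnd by auto
  define r where "r = r1 \<circ> r2"
  have rmono: "strict_mono r" unfolding r_def using r1(1) r2(1) by (rule strict_mono_o)
  define q where "q n = ps (r n)" for n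
  have cu: "(\<lambda>n. fst (q n) x) \<longlonglongrightarrow> u x" for x
    using LIMSEQ_subseq_LIMSEQ[OF r1(2)[rule_format, of x] r2(1)] unfolding q_def r_def o_def .
  have cv: "(\<lambda>n. snd (q n) x) \<longlonglongrightarrow> v x" for x
    using r2(2) unfolding q_def r_def o_def by auto
  define p where "p = (u, v)"
  have qNE: "q n \<in> NE" for n unfolding q_def by (rule ps(1))
  have hsq: "Hs (q n)" for n unfolding q_def by (rule hsps)
  have NBq: "N (q n) = Bf (q n)" for n using qNE[of n] nehari_iff by auto
  have Nq_le: "N (q n) \<le> Nb" for n unfolding q_def by (rule Nps)
  have bq: "\<bar>fst (q n) x\<bar> \<le> L \<and> \<bar>snd (q n) x\<bar> \<le> L" for n x unfolding q_def by (rule bnd)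
  have Jq: "(\<lambda>n. Jv (q n)) \<longlonglongrightarrow> c"
  proof (rule tendsto_sandwich[of "\<lambda>n. c" _ _ "\<lambda>n. c + inverse (real (Suc n))"])
    show "\<forall>\<^sub>F n in sequentially. c \<le> Jv (q n)" using c_lower qNE by auto
    show "\<forall>\<^sub>F n in sequentially. Jv (q n) \<le> c + inverse (real (Suc n))"
    proof (rule always_eventually, rule allI)
      fix n
      have "n \<le> r n" by (rule seq_suble[OF rmono])
      then have "1 / (real (r n) + 1) \<le> 1 / (real n + 1)" by (intro divide_left_mono) auto
      moreover have "inverse (real (Suc n)) = 1 / (real n + 1)" by (simp add: inverse_eq_divide)
      ultimately show "Jv (q n) \<le> c + inverse (real (Suc n))"
        using ps(2)[of "r n"] unfolding q_def by linarith
    qed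
    show "(\<lambda>n. c) \<longlonglongrightarrow> c" by simp
    show "(\<lambda>n. c + inverse (real (Suc n))) \<longlonglongrightarrow> c"
      using tendsto_add[OF tendsto_const LIMSEQ_inverse_real_of_nat, of c] by simp
  qed
  have Nq: "(\<lambda>n. N (q n)) \<longlonglongrightarrow> c / \<kappa>"
  proof -
    have "(\<lambda>n. Jv (q n) / \<kappa>) \<longlonglongrightarrow> c / \<kappa>" by (rule tendsto_divide[OF Jq tendsto_const]) (use \<kappa>pos in simp)
    moreover have "Jv (q n) / \<kappa> = N (q n)" for n using Jk[OF qNE[of n]] \<kappa>pos by simp
    ultimately show ?thesis by simp
  qed
  have bp: "\<bar>fst p x\<bar> \<le> L \<and> \<bar>snd p x\<bar> \<le> L" for x
  proof -
    have "\<bar>u x\<bar> \<le> L" by (rule LIMSEQ_le_const2[OF tendsto_rabs[OF cu]]) (use bq in auto)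
    moreover have "\<bar>v x\<bar> \<le> L" by (rule LIMSEQ_le_const2[OF tendsto_rabs[OF cv]]) (use bq in auto)
    ultimately show ?thesis unfolding p_def by simp
  qed
  have IPc: "(\<lambda>n. \<mu> x * IP (q n) (q n) x) \<longlonglongrightarrow> \<mu> x * IP p p x" for x
    unfolding IP_def Gamma_def p_def fst_conv snd_conv
    by (intro tendsto_intros cu cv)
  have partial: "sum (\<lambda>x. \<mu> x * IP p p x) F \<le> c / \<kappa>" if F: "finite F" for F
  proof (rule LIMSEQ_le[OF tendsto_sum[OF IPc] Nq])
    show "\<exists>K. \<forall>n\<ge>K. (\<Sum>x\<in>F. \<mu> x * IP (q n) (q n) x) \<le> N (q n)"
    proof (intro exI allI impI)
      fix n
      show "(\<Sum>x\<in>F. \<mu> x * IP (q n) (q n) x) \<le> N (q n)"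
        unfolding N_eq by (rule finite_sum_le_infsum) (use hsq Hs_def F mu_IP_nonneg in auto)
    qed
  qed
  have hsp: "Hs p" unfolding Hs_def
    by (rule nonneg_bdd_above_summable_on) (use partial mu_IP_nonneg in \<open>auto intro!: bdd_aboveI2\<close>)
  have Np_le: "N p \<le> c / \<kappa>"
    unfolding N_eq by (rule infsum_le_finite_sums) (use hsp Hs_def partial in auto)
  have Nb_ge: "c / \<kappa> \<le> Nb" unfolding Nb_def using \<kappa>pos by (simp add: divide_right_mono)
  have cpos: "c > 0" using c_ge \<kappa>pos m0pos by (smt (verit) mult_pos_pos)
  have Nb_pos: "Nb > 0" unfolding Nb_def using cpos \<kappa>pos by simp
  have Bq: "(\<lambda>n. Bf (q n)) \<longlonglongrightarrow> Bf p"
    unfolding Bf_def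
  proof (rule infsum_tail_tendsto)
    show "\<forall>\<^sub>F n in sequentially. (\<lambda>x. \<mu> x * P (q n) x) summable_on UNIV"
      by (rule always_eventually) (use P_summable hsq in auto)
    show "(\<lambda>x. \<mu> x * P p x) summable_on UNIV" by (rule P_summable[OF hsp])
    show "(\<lambda>n. \<mu> x * P (q n) x) \<longlonglongrightarrow> \<mu> x * P p x" for x
      unfolding P_def p_def fst_conv snd_conv
      by (intro tendsto_mult tendsto_const tendsto_powr2 tendsto_rabs cu cv) (use al be in auto)
  next
    fix \<epsilon> :: real assume \<epsilon>: "\<epsilon> > 0"
    define M where "M = max 1 (L powr (\<alpha> + \<beta> - 2) * Nb / (lam * \<epsilon>))"
    have Mpos: "M > 0" unfolding M_def by simp
    have key: "L powr (\<alpha> + \<beta> - 2) / (lam * M) * Nh \<le> \<epsilon>" if "Nh \<le> Nb" "Nh \<ge> 0" for Nh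
    proof -
      have "L powr (\<alpha> + \<beta> - 2) * Nb / (lam * \<epsilon>) \<le> M" unfolding M_def by simp
      then have "L powr (\<alpha> + \<beta> - 2) * Nb \<le> M * (lam * \<epsilon>)"
        using lam \<epsilon> by (simp add: pos_divide_le_eq)
      then have "L powr (\<alpha> + \<beta> - 2) * Nh \<le> M * (lam * \<epsilon>)"
        using that by (smt (verit) mult_left_mono powr_ge_zero)
      then show ?thesis using lam Mpos by (simp add: pos_divide_le_eq mult_ac)
    qed
    show "\<exists>S. finite S \<and> (\<forall>\<^sub>F n in sequentially. infsum (\<lambda>x. \<bar>\<mu> x * P (q n) x\<bar>) (-S) \<le> \<epsilon>)
                  \<and> infsum (\<lambda>x. \<bar>\<mu> x * P p x\<bar>) (-S) \<le> \<epsilon>"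
    proof (intro exI conjI)
      show "finite {x. a x < M \<or> b x < M}" by (rule finite_low)
      show "\<forall>\<^sub>F n in sequentially. infsum (\<lambda>x. \<bar>\<mu> x * P (q n) x\<bar>) (-{x. a x < M \<or> b x < M}) \<le> \<epsilon>"
      proof (rule always_eventually, rule allI)
        fix n
        show "infsum (\<lambda>x. \<bar>\<mu> x * P (q n) x\<bar>) (-{x. a x < M \<or> b x < M}) \<le> \<epsilon>"
          using tail_bound[OF hsq[of n] bq[of n] Mpos] key[OF Nq_le[of n] N_nonneg[of "q n"]] by linarith
      qed
      show "infsum (\<lambda>x. \<bar>\<mu> x * P p x\<bar>) (-{x. a x < M \<or> b x < M}) \<le> \<epsilon>"
        using tail_bound[OF hsp bp Mpos] key[of "N p"] Np_le Nb_ge N_nonneg[of p] by linarith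
    qed
  qed
  have Bp: "Bf p = c / \<kappa>"
  proof -
    have "(\<lambda>n. Bf (q n)) \<longlonglongrightarrow> c / \<kappa>" using Nq NBq by simp
    then show ?thesis using Bq LIMSEQ_unique by blast
  qed
  have Bpos: "Bf p > 0" unfolding Bp using cpos \<kappa>pos by simp
  have nz: "p \<noteq> z0" by (rule Bf_pos_nz[OF Bpos])
  have Npos: "N p > 0" by (rule N_pos[OF hsp nz])
  have NeqB: "N p = Bf p"
  proof (rule ccontr)
    assume "N p \<noteq> Bf p"
    then have lt: "N p < Bf p" using Np_le Bp by simp
    define t where "t = (N p / Bf p) powr (1 / (\<alpha> + \<beta> - 2))"
    have tpos: "t > 0" and tNE: "sc t p \<in> NE"
      and Jt: "Jv (sc t p) = (1/2 - 1/(\<alpha> + \<beta>)) * (t\<^sup>2 * N p)"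
      using projection[OF hsp Bpos] unfolding t_def by auto
    have "t < 1 powr (1 / (\<alpha> + \<beta> - 2))" unfolding t_def
      by (rule powr_less_mono2) (use al be lt Npos Bpos in auto)
    then have t1: "t < 1" by simp
    then have "t\<^sup>2 < 1" using tpos by (simp add: power_less_one_iff abs_less_iff)
    then have "t\<^sup>2 * N p < N p" using Npos by simp
    then have "Jv (sc t p) < \<kappa> * N p" unfolding Jt \<kappa>_def[symmetric] using \<kappa>pos by simp
    also have "\<dots> \<le> \<kappa> * (c / \<kappa>)" using Np_le \<kappa>pos by (intro mult_left_mono) auto
    also have "\<dots> = c" using \<kappa>pos by simp
    finally show False using c_lower[OF tNE] by simp
  qed
  have pNE: "p \<in> NE" unfolding nehari_iff using hsp nz NeqB by simp
  have "Jv p = \<kappa> * N p" by (rule Jk[OF pNE])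
  also have "\<dots> = c" using NeqB Bp \<kappa>pos by simp
  finally show ?thesis using pNE unfolding c_def by blast
qed

end

definition hf :: "real \<Rightarrow> real \<Rightarrow> real \<Rightarrow> real \<Rightarrow> real \<Rightarrow> real \<Rightarrow> real \<Rightarrow> real" where
  "hf al be u \<xi> v \<eta> s = \<bar>u + s * \<xi>\<bar> powr al * \<bar>v + s * \<eta>\<bar> powr be"

definition hd :: "real \<Rightarrow> real \<Rightarrow> real \<Rightarrow> real \<Rightarrow> real \<Rightarrow> real \<Rightarrow> real \<Rightarrow> real" where
  "hd al be u \<xi> v \<eta> s = al * (\<bar>u + s * \<xi>\<bar> powr (al - 2) * (u + s * \<xi>)) * \<xi> * \<bar>v + s * \<eta>\<bar> powr be
     + be * (\<bar>v + s * \<eta>\<bar> powr (be - 2) * (v + s * \<eta>)) * \<eta> * \<bar>u + s * \<xi>\<bar> powr al"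

lemma DERIV_lin: "((\<lambda>s. u + s * \<xi>) has_real_derivative \<xi>) (at \<sigma>)"
proof -
  have "((\<lambda>s. u + s * \<xi>) has_real_derivative 0 + 1 * \<xi>) (at \<sigma>)"
    by (intro DERIV_add DERIV_const DERIV_cmult_right DERIV_ident)
  then show ?thesis by simp
qed

lemma DERIV_hf:
  assumes "al > 1" "be > 1"
  shows "(hf al be u \<xi> v \<eta> has_real_derivative hd al be u \<xi> v \<eta> \<sigma>) (at \<sigma>)"
proof -
  have d1: "((\<lambda>s. \<bar>u + s * \<xi>\<bar> powr al) has_real_derivative
      al * (\<bar>u + \<sigma> * \<xi>\<bar> powr (al - 2) * (u + \<sigma> * \<xi>)) * \<xi>) (at \<sigma>)"
    by (rule DERIV_chain'[OF DERIV_lin DERIV_abs_powr[OF assms(1)]])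
  have d2: "((\<lambda>s. \<bar>v + s * \<eta>\<bar> powr be) has_real_derivative
      be * (\<bar>v + \<sigma> * \<eta>\<bar> powr (be - 2) * (v + \<sigma> * \<eta>)) * \<eta>) (at \<sigma>)"
    by (rule DERIV_chain'[OF DERIV_lin DERIV_abs_powr[OF assms(2)]])
  show ?thesis unfolding hf_def hd_def by (rule DERIV_mult[OF d1 d2])
qed

lemma abs_prod4:
  fixes al e y z W :: real
  assumes "al > 0"
  shows "\<bar>al * (\<bar>y\<bar> powr (e - 2) * y) * z * \<bar>W\<bar> powr g\<bar> = al * \<bar>z\<bar> * (\<bar>y\<bar> powr (e - 1) * \<bar>W\<bar> powr g)"
proof -
  have "\<bar>al * (\<bar>y\<bar> powr (e - 2) * y) * z * \<bar>W\<bar> powr g\<bar>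
      = \<bar>al\<bar> * \<bar>\<bar>y\<bar> powr (e - 2) * y\<bar> * \<bar>z\<bar> * \<bar>\<bar>W\<bar> powr g\<bar>"
    by (simp only: abs_mult)
  also have "\<dots> = al * \<bar>y\<bar> powr (e - 1) * \<bar>z\<bar> * \<bar>W\<bar> powr g"
    unfolding abs_powr_sgn using assms by simp
  finally show ?thesis by (simp add: mult_ac)
qed

lemma hd_bound:
  assumes al: "al > 1" and be: "be > 1" and s: "\<bar>\<sigma>\<bar> \<le> 1"
    and m: "\<bar>u\<bar> + \<bar>\<xi>\<bar> + \<bar>v\<bar> + \<bar>\<eta>\<bar> \<le> Lb"
  shows "\<bar>hd al be u \<xi> v \<eta> \<sigma>\<bar> \<le> (al + be) * Lb powr (al + be - 2) * (\<bar>u\<bar> + \<bar>\<xi>\<bar> + \<bar>v\<bar> + \<bar>\<eta>\<bar>)\<^sup>2"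
proof -
  define m where "m = \<bar>u\<bar> + \<bar>\<xi>\<bar> + \<bar>v\<bar> + \<bar>\<eta>\<bar>"
  have m0: "0 \<le> m" unfolding m_def by simp
  have mL: "m \<le> Lb" using m unfolding m_def .
  have "\<bar>\<sigma> * \<xi>\<bar> \<le> \<bar>\<xi>\<bar>" using s by (simp add: abs_mult mult_left_le_one_le)
  then have y1: "\<bar>u + \<sigma> * \<xi>\<bar> \<le> m" unfolding m_def by (smt (verit))
  have "\<bar>\<sigma> * \<eta>\<bar> \<le> \<bar>\<eta>\<bar>" using s by (simp add: abs_mult mult_left_le_one_le)
  then have y2: "\<bar>v + \<sigma> * \<eta>\<bar> \<le> m" unfolding m_def by (smt (verit))
  have xm: "\<bar>\<xi>\<bar> \<le> m" and em: "\<bar>\<eta>\<bar> \<le> m" unfolding m_def by auto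
  have key: "m powr (al + be - 1) \<le> Lb powr (al + be - 2) * m"
  proof -
    have "m powr (al + be - 1) \<le> Lb powr (al + be - 1 - 1) * m powr 1"
      by (rule powr_split_bound) (use m0 mL al be in auto)
    then show ?thesis using powr_one'[OF m0] by (simp add: algebra_simps)
  qed
  have t1: "\<bar>u + \<sigma> * \<xi>\<bar> powr (al - 1) * \<bar>v + \<sigma> * \<eta>\<bar> powr be \<le> Lb powr (al + be - 2) * m"
  proof -
    have "\<bar>u + \<sigma> * \<xi>\<bar> powr (al - 1) * \<bar>v + \<sigma> * \<eta>\<bar> powr be \<le> m powr (al - 1 + be)"
      by (rule powr_prod_bound) (use y1 y2 al be in auto)
    then show ?thesis using key by (simp add: algebra_simps)
  qed
  have t2: "\<bar>v + \<sigma> * \<eta>\<bar> powr (be - 1) * \<bar>u + \<sigma> * \<xi>\<bar> powr al \<le> Lb powr (al + be - 2) * m"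
  proof -
    have "\<bar>v + \<sigma> * \<eta>\<bar> powr (be - 1) * \<bar>u + \<sigma> * \<xi>\<bar> powr al \<le> m powr (be - 1 + al)"
      by (rule powr_prod_bound) (use y1 y2 al be in auto)
    then show ?thesis using key by (simp add: algebra_simps)
  qed
  let ?K = "Lb powr (al + be - 2)"
  have a1: "\<bar>al * (\<bar>u + \<sigma> * \<xi>\<bar> powr (al - 2) * (u + \<sigma> * \<xi>)) * \<xi> * \<bar>v + \<sigma> * \<eta>\<bar> powr be\<bar>
      = al * \<bar>\<xi>\<bar> * (\<bar>u + \<sigma> * \<xi>\<bar> powr (al - 1) * \<bar>v + \<sigma> * \<eta>\<bar> powr be)"
    using al by (intro abs_prod4) simp
  have a2: "\<bar>be * (\<bar>v + \<sigma> * \<eta>\<bar> powr (be - 2) * (v + \<sigma> * \<eta>)) * \<eta> * \<bar>u + \<sigma> * \<xi>\<bar> powr al\<bar>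
      = be * \<bar>\<eta>\<bar> * (\<bar>v + \<sigma> * \<eta>\<bar> powr (be - 1) * \<bar>u + \<sigma> * \<xi>\<bar> powr al)"
    using be by (intro abs_prod4) simp
  have b1: "al * \<bar>\<xi>\<bar> * (\<bar>u + \<sigma> * \<xi>\<bar> powr (al - 1) * \<bar>v + \<sigma> * \<eta>\<bar> powr be) \<le> al * m * (?K * m)"
  proof -
    have "\<bar>\<xi>\<bar> * (\<bar>u + \<sigma> * \<xi>\<bar> powr (al - 1) * \<bar>v + \<sigma> * \<eta>\<bar> powr be) \<le> m * (?K * m)"
      by (rule mult_mono[OF xm t1]) (use m0 in auto)
    then show ?thesis using al by (simp add: mult.assoc mult_left_mono)
  qed
  have b2: "be * \<bar>\<eta>\<bar> * (\<bar>v + \<sigma> * \<eta>\<bar> powr (be - 1) * \<bar>u + \<sigma> * \<xi>\<bar> powr al) \<le> be * m * (?K * m)"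
  proof -
    have "\<bar>\<eta>\<bar> * (\<bar>v + \<sigma> * \<eta>\<bar> powr (be - 1) * \<bar>u + \<sigma> * \<xi>\<bar> powr al) \<le> m * (?K * m)"
      by (rule mult_mono[OF em t2]) (use m0 in auto)
    then show ?thesis using be by (simp add: mult.assoc mult_left_mono)
  qed
  have "\<bar>hd al be u \<xi> v \<eta> \<sigma>\<bar> \<le> al * m * (?K * m) + be * m * (?K * m)"
    unfolding hd_def using abs_triangle_ineq[of "al * (\<bar>u + \<sigma> * \<xi>\<bar> powr (al - 2) * (u + \<sigma> * \<xi>)) * \<xi> * \<bar>v + \<sigma> * \<eta>\<bar> powr be"
        "be * (\<bar>v + \<sigma> * \<eta>\<bar> powr (be - 2) * (v + \<sigma> * \<eta>)) * \<eta> * \<bar>u + \<sigma> * \<xi>\<bar> powr al"] a1 a2 b1 b2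
    by linarith
  also have "\<dots> = (al + be) * ?K * m\<^sup>2" by (simp add: algebra_simps power2_eq_square)
  finally show ?thesis unfolding m_def .
qed

lemma quot_bound:
  assumes al: "al > 1" and be: "be > 1" and s: "\<bar>s\<bar> < 1" "s \<noteq> 0"
    and m: "\<bar>u\<bar> + \<bar>\<xi>\<bar> + \<bar>v\<bar> + \<bar>\<eta>\<bar> \<le> Lb"
  shows "\<bar>(hf al be u \<xi> v \<eta> s - hf al be u \<xi> v \<eta> 0) / s\<bar> \<le> (al + be) * Lb powr (al + be - 2) * (\<bar>u\<bar> + \<bar>\<xi>\<bar> + \<bar>v\<bar> + \<bar>\<eta>\<bar>)\<^sup>2"
proof -
  have D: "\<And>x. (hf al be u \<xi> v \<eta> has_real_derivative hd al be u \<xi> v \<eta> x) (at x)"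
    by (rule DERIV_hf[OF al be])
  obtain z where z: "\<bar>z\<bar> \<le> 1" "(hf al be u \<xi> v \<eta> s - hf al be u \<xi> v \<eta> 0) / s = hd al be u \<xi> v \<eta> z"
  proof (cases "s > 0")
    case True
    obtain z where "0 < z" "z < s" "hf al be u \<xi> v \<eta> s - hf al be u \<xi> v \<eta> 0 = (s - 0) * hd al be u \<xi> v \<eta> z"
      using MVT2[OF True D] by blast
    then show ?thesis using that[of z] s True by auto
  next
    case False
    then have sn: "s < 0" using s by simp
    obtain z where "s < z" "z < 0" "hf al be u \<xi> v \<eta> 0 - hf al be u \<xi> v \<eta> s = (0 - s) * hd al be u \<xi> v \<eta> z"
      using MVT2[OF sn D] by blast
    then show ?thesis using that[of z] s sn by (auto simp: field_simps)
  qed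
  then show ?thesis using hd_bound[OF al be z(1) m] by simp
qed

lemma sq4: "(a + b + c + d)\<^sup>2 \<le> 4 * (a\<^sup>2 + b\<^sup>2 + c\<^sup>2 + d\<^sup>2)" for a b c d :: real
proof -
  have "4 * (a\<^sup>2 + b\<^sup>2 + c\<^sup>2 + d\<^sup>2) - (a + b + c + d)\<^sup>2
      = (a-b)\<^sup>2 + (a-c)\<^sup>2 + (a-d)\<^sup>2 + (b-c)\<^sup>2 + (b-d)\<^sup>2 + (c-d)\<^sup>2"
    by (simp add: power2_eq_square algebra_simps)
  moreover have "(a-b)\<^sup>2 + (a-c)\<^sup>2 + (a-d)\<^sup>2 + (b-c)\<^sup>2 + (b-d)\<^sup>2 + (c-d)\<^sup>2 \<ge> 0" by simp
  ultimately show ?thesis by linarith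
qed

context gsetup begin

lemma P_pl: "P (pl p s q) x = hf \<alpha> \<beta> (fst p x) (fst q x) (snd p x) (snd q x) s"
  unfolding P_def pl_def hf_def by simp

lemma pl_zero: "pl p 0 q = p"
  unfolding pl_def by simp

lemma DERIV_B:
  assumes hp: "Hs p" and hq: "Hs q"
  shows "((\<lambda>s. Bf (pl p s q)) has_real_derivative
           infsum (\<lambda>x. \<mu> x * hd \<alpha> \<beta> (fst p x) (fst q x) (snd p x) (snd q x) 0) UNIV) (at 0)"
proof -
  define H where "H s x = hf \<alpha> \<beta> (fst p x) (fst q x) (snd p x) (snd q x) s" for s x
  define G where "G x = \<mu> x * hd \<alpha> \<beta> (fst p x) (fst q x) (snd p x) (snd q x) 0" for x
  have BH: "Bf (pl p s q) = infsum (\<lambda>x. \<mu> x * H s x) UNIV" for s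
    unfolding Bf_def P_pl H_def ..
  have sH: "(\<lambda>x. \<mu> x * H s x) summable_on UNIV" for s
    using P_summable[OF Hs_pl(1)[OF hp hq, of s]] unfolding P_pl H_def .
  have quot: "(Bf (pl p (0 + s) q) - Bf (pl p 0 q)) / s = infsum (\<lambda>x. \<mu> x * ((H s x - H 0 x) / s)) UNIV" for s
  proof -
    have "infsum (\<lambda>x. \<mu> x * ((H s x - H 0 x) / s)) UNIV
        = infsum (\<lambda>x. inverse s * (\<mu> x * H s x + (- (\<mu> x * H 0 x)))) UNIV"
      by (simp add: divide_inverse algebra_simps)
    also have "\<dots> = inverse s * infsum (\<lambda>x. \<mu> x * H s x + (- (\<mu> x * H 0 x))) UNIV"
      by (rule infsum_cmult_right')
    also have "infsum (\<lambda>x. \<mu> x * H s x + (- (\<mu> x * H 0 x))) UNIV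
        = infsum (\<lambda>x. \<mu> x * H s x) UNIV + infsum (\<lambda>x. - (\<mu> x * H 0 x)) UNIV"
      by (rule infsum_add[OF sH summable_on_uminus[THEN iffD2, OF sH]])
    also have "infsum (\<lambda>x. - (\<mu> x * H 0 x)) UNIV = - infsum (\<lambda>x. \<mu> x * H 0 x) UNIV"
      by (rule infsum_uminus)
    finally show ?thesis unfolding BH by (simp add: divide_inverse)
  qed
  define Lb where "Lb = 2 * sqrt (N p / m0) + 2 * sqrt (N q / m0)"
  define C where "C = (\<alpha> + \<beta>) * Lb powr (\<alpha> + \<beta> - 2) * 4"
  define d where "d x = C * (\<mu> x * IP p p x + \<mu> x * IP q q x)" for x
  have Cnn: "C \<ge> 0" unfolding C_def using al be by simp
  have ds: "d summable_on UNIV" unfolding d_def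
    by (rule summable_on_cmult_right, rule summable_on_add) (use hp hq Hs_def in auto)
  have mLb: "\<bar>fst p x\<bar> + \<bar>fst q x\<bar> + \<bar>snd p x\<bar> + \<bar>snd q x\<bar> \<le> Lb" for x
    using abs_bound[OF hp, of x] abs_bound[OF hq, of x] unfolding Lb_def by linarith
  have msq: "(\<bar>fst p x\<bar> + \<bar>fst q x\<bar> + \<bar>snd p x\<bar> + \<bar>snd q x\<bar>)\<^sup>2 \<le> 4 * (IP p p x + IP q q x)" for x
  proof -
    have "(\<bar>fst p x\<bar> + \<bar>fst q x\<bar> + \<bar>snd p x\<bar> + \<bar>snd q x\<bar>)\<^sup>2
        \<le> 4 * ((fst p x)\<^sup>2 + (fst q x)\<^sup>2 + (snd p x)\<^sup>2 + (snd q x)\<^sup>2)"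
      using sq4[of "\<bar>fst p x\<bar>" "\<bar>fst q x\<bar>" "\<bar>snd p x\<bar>" "\<bar>snd q x\<bar>"] by simp
    also have "\<dots> \<le> 4 * (IP p p x + IP q q x)" using IP_ge_sq[of p x] IP_ge_sq[of q x] by simp
    finally show ?thesis .
  qed
  have ev: "\<forall>\<^sub>F s in at (0::real). s \<noteq> 0 \<and> \<bar>s\<bar> < 1"
    unfolding eventually_at by (intro exI[of _ 1]) (auto simp: dist_real_def)
  have dom: "\<forall>\<^sub>F s in at 0. \<forall>x. \<bar>\<mu> x * ((H s x - H 0 x) / s)\<bar> \<le> d x"
    using ev
  proof eventually_elim
    case (elim s)
    show ?case
    proof
      fix x
      have qb: "\<bar>(H s x - H 0 x) / s\<bar> \<le> (\<alpha> + \<beta>) * Lb powr (\<alpha> + \<beta> - 2) *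
          (\<bar>fst p x\<bar> + \<bar>fst q x\<bar> + \<bar>snd p x\<bar> + \<bar>snd q x\<bar>)\<^sup>2"
        unfolding H_def by (rule quot_bound) (use al be elim mLb in auto)
      also have "\<dots> \<le> (\<alpha> + \<beta>) * Lb powr (\<alpha> + \<beta> - 2) * (4 * (IP p p x + IP q q x))"
        by (rule mult_left_mono[OF msq]) (use al be in simp)
      also have "\<dots> = C * (IP p p x + IP q q x)" unfolding C_def by simp
      finally have "\<mu> x * \<bar>(H s x - H 0 x) / s\<bar> \<le> \<mu> x * (C * (IP p p x + IP q q x))"
        by (rule mult_left_mono) (use mupos[of x] in simp)
      moreover have "\<bar>\<mu> x * ((H s x - H 0 x) / s)\<bar> = \<mu> x * \<bar>(H s x - H 0 x) / s\<bar>"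
        by (simp only: abs_mult abs_of_pos[OF mupos[of x]])
      moreover have "\<mu> x * (C * (IP p p x + IP q q x)) = d x" unfolding d_def by (simp add: algebra_simps)
      ultimately show "\<bar>\<mu> x * ((H s x - H 0 x) / s)\<bar> \<le> d x" by linarith
    qed
  qed
  have pw: "((\<lambda>s. \<mu> x * ((H s x - H 0 x) / s)) \<longlongrightarrow> G x) (at 0)" for x
  proof -
    have "(H' has_real_derivative hd \<alpha> \<beta> (fst p x) (fst q x) (snd p x) (snd q x) 0) (at 0)"
      if "H' = hf \<alpha> \<beta> (fst p x) (fst q x) (snd p x) (snd q x)" for H'
      unfolding that by (rule DERIV_hf[OF al be])
    then have "((\<lambda>s. (H (0 + s) x - H 0 x) / s) \<longlongrightarrow> hd \<alpha> \<beta> (fst p x) (fst q x) (snd p x) (snd q x) 0) (at 0)"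
      unfolding DERIV_def H_def by simp
    then have "((\<lambda>s. (H s x - H 0 x) / s) \<longlongrightarrow> hd \<alpha> \<beta> (fst p x) (fst q x) (snd p x) (snd q x) 0) (at 0)"
      by simp
    then show ?thesis unfolding G_def by (rule tendsto_mult_left)
  qed
  have "((\<lambda>s. infsum (\<lambda>x. \<mu> x * ((H s x - H 0 x) / s)) UNIV) \<longlongrightarrow> infsum G UNIV) (at 0)"
    by (rule infsum_dominated_tendsto[OF _ dom ds pw]) simp
  then have "((\<lambda>s. (Bf (pl p (0 + s) q) - Bf (pl p 0 q)) / s) \<longlongrightarrow> infsum G UNIV) (at 0)"
    unfolding quot .
  then show ?thesis unfolding DERIV_def G_def .
qed

end

context gsetup begin

lemma J_deriv_split:
  "J_deriv w \<mu> a b lam \<alpha> \<beta> p q = H_inner w \<mu> a b lam p q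
     - infsum (\<lambda>x. \<mu> x * hd \<alpha> \<beta> (fst p x) (fst q x) (snd p x) (snd q x) 0) UNIV / (\<alpha> + \<beta>)"
proof -
  obtain u v where p: "p = (u, v)" by (cases p)
  obtain \<xi> \<eta> where q: "q = (\<xi>, \<eta>)" by (cases q)
  have e: "\<mu> x * (\<alpha> / (\<alpha> + \<beta>) * \<bar>u x\<bar> powr (\<alpha> - 2) * u x * \<bar>v x\<bar> powr \<beta> * \<xi> x
                       + \<beta> / (\<alpha> + \<beta>) * \<bar>u x\<bar> powr \<alpha> * \<bar>v x\<bar> powr (\<beta> - 2) * v x * \<eta> x)
      = inverse (\<alpha> + \<beta>) * (\<mu> x * hd \<alpha> \<beta> (u x) (\<xi> x) (v x) (\<eta> x) 0)" for x
    unfolding hd_def by (simp add: divide_inverse algebra_simps)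
  have "J_deriv w \<mu> a b lam \<alpha> \<beta> (u, v) (\<xi>, \<eta>) = H_inner w \<mu> a b lam (u, v) (\<xi>, \<eta>)
     - infsum (\<lambda>x. inverse (\<alpha> + \<beta>) * (\<mu> x * hd \<alpha> \<beta> (u x) (\<xi> x) (v x) (\<eta> x) 0)) UNIV"
    unfolding J_deriv_def prod.case mu_integral_def e ..
  also have "infsum (\<lambda>x. inverse (\<alpha> + \<beta>) * (\<mu> x * hd \<alpha> \<beta> (u x) (\<xi> x) (v x) (\<eta> x) 0)) UNIV
      = inverse (\<alpha> + \<beta>) * infsum (\<lambda>x. \<mu> x * hd \<alpha> \<beta> (u x) (\<xi> x) (v x) (\<eta> x) 0) UNIV"
    by (rule infsum_cmult_right')
  finally show ?thesis unfolding p q by (simp add: divide_inverse mult_ac)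
qed

lemma critical:
  assumes pNE: "p \<in> NE" and pmin: "\<And>r. r \<in> NE \<Longrightarrow> Jv p \<le> Jv r" and hq: "Hs q"
  shows "J_deriv w \<mu> a b lam \<alpha> \<beta> p q = 0"
proof -
  define \<kappa> where "\<kappa> = 1/2 - 1/(\<alpha> + \<beta>)"
  have \<kappa>pos: "\<kappa> > 0" unfolding \<kappa>_def using al be by (simp add: field_simps)
  have hp: "Hs p" and nz: "p \<noteq> z0" and NB: "N p = Bf p" using pNE nehari_iff by auto
  define m where "m = N p"
  have mpos: "m > 0" unfolding m_def by (rule N_pos[OF hp nz])
  define A where "A = H_inner w \<mu> a b lam p q"
  define G where "G = infsum (\<lambda>x. \<mu> x * hd \<alpha> \<beta> (fst p x) (fst q x) (snd p x) (snd q x) 0) UNIV"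
  define g where "g s = Bf (pl p s q)" for s
  have dg: "(g has_real_derivative G) (at 0)" unfolding g_def G_def by (rule DERIV_B[OF hp hq])
  have g0: "g 0 = m" unfolding g_def pl_zero m_def NB ..
  have Nf: "N (pl p s q) = m + 2 * s * A + s\<^sup>2 * N q" for s
    unfolding m_def A_def by (rule Hs_pl(2)[OF hp hq])
  have "(g \<longlongrightarrow> g 0) (at 0)" using DERIV_isCont[OF dg] by (simp add: isCont_def)
  then have "\<forall>\<^sub>F s in at 0. g s > 0" using g0 mpos by (intro order_tendstoD(1)) auto
  then obtain d where d: "d > 0" "\<And>s. s \<noteq> 0 \<Longrightarrow> dist s 0 < d \<Longrightarrow> g s > 0"
    unfolding eventually_at by auto
  have ineq: "(\<alpha> + \<beta>) * ln (N (pl p s q)) - 2 * ln (g s) \<ge> (\<alpha> + \<beta>) * ln m - 2 * ln m"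
    if gs: "g s > 0" for s
  proof -
    define r where "r = pl p s q"
    have hr: "Hs r" unfolding r_def by (rule Hs_pl(1)[OF hp hq])
    have Br: "Bf r = g s" unfolding r_def g_def ..
    have Brp: "Bf r > 0" using Br gs by simp
    define f where "f = N r"
    have fpos: "f > 0" unfolding f_def by (rule N_pos[OF hr Bf_pos_nz[OF Brp]])
    define t where "t = (N r / Bf r) powr (1 / (\<alpha> + \<beta> - 2))"
    have tpos: "t > 0" and tNE: "sc t r \<in> NE"
      and Jt: "Jv (sc t r) = (1/2 - 1/(\<alpha> + \<beta>)) * (t\<^sup>2 * N r)"
      using projection[OF hr Brp] unfolding t_def by auto
    have "\<kappa> * m \<le> \<kappa> * (t\<^sup>2 * f)"
      using pmin[OF tNE] J_nehari[OF pNE] Jt unfolding \<kappa>_def[symmetric] m_def f_def by simp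
    then have mle: "m \<le> t\<^sup>2 * f" using \<kappa>pos by simp
    have t2: "t\<^sup>2 = (f / g s) powr (2 / (\<alpha> + \<beta> - 2))"
    proof -
      have "t\<^sup>2 = t powr 2" using powr_two'[of t] tpos by simp
      also have "\<dots> = (f / g s) powr (1 / (\<alpha> + \<beta> - 2) * 2)" unfolding t_def f_def Br powr_powr ..
      finally show ?thesis by simp
    qed
    have "ln m \<le> ln (t\<^sup>2 * f)" using mle mpos by simp
    also have "ln (t\<^sup>2 * f) = ln (t\<^sup>2) + ln f" using tpos fpos by (simp add: ln_mult)
    also have "ln (t\<^sup>2) = 2 / (\<alpha> + \<beta> - 2) * (ln f - ln (g s))"
      unfolding t2 ln_powr using fpos gs by (simp add: ln_div)
    finally have "ln m \<le> 2 / (\<alpha> + \<beta> - 2) * (ln f - ln (g s)) + ln f" .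
    then have "(\<alpha> + \<beta> - 2) * ln m \<le> (\<alpha> + \<beta> - 2) * (2 / (\<alpha> + \<beta> - 2) * (ln f - ln (g s)) + ln f)"
      by (rule mult_left_mono) (use al be in simp)
    also have "\<dots> = ((\<alpha> + \<beta> - 2) * (2 / (\<alpha> + \<beta> - 2))) * (ln f - ln (g s)) + (\<alpha> + \<beta> - 2) * ln f"
      by (simp only: distrib_left mult.assoc)
    also have "(\<alpha> + \<beta> - 2) * (2 / (\<alpha> + \<beta> - 2)) = 2"
    proof -
      have "\<alpha> + \<beta> - 2 \<noteq> 0" using al be by simp
      moreover have "x * (2 / x) = 2" if "x \<noteq> 0" for x :: real using that by simp
      ultimately show ?thesis by blast
    qed
    finally show ?thesis unfolding f_def r_def by (simp add: algebra_simps)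
  qed
  define \<psi> where "\<psi> s = (\<alpha> + \<beta>) * ln (m + 2 * s * A + s\<^sup>2 * N q) - 2 * ln (g s)" for s
  have dpoly: "((\<lambda>s. m + 2 * s * A + s\<^sup>2 * N q) has_real_derivative 2 * A) (at 0)"
  proof -
    have sq: "((\<lambda>s::real. s ^ 2) has_real_derivative of_nat 2 * (1 * 0 ^ (2 - Suc 0))) (at 0)"
      by (rule DERIV_power[OF DERIV_ident])
    have "((\<lambda>s. m + 2 * s * A + s\<^sup>2 * N q) has_real_derivative 0 + 2 * 1 * A + (of_nat 2 * (1 * 0 ^ (2 - Suc 0))) * N q) (at 0)"
      by (intro DERIV_add DERIV_const DERIV_cmult_right DERIV_cmult DERIV_ident sq)
    then show ?thesis by simp
  qed
  have dln1: "((\<lambda>s. ln (m + 2 * s * A + s\<^sup>2 * N q)) has_real_derivative inverse m * (2 * A)) (at 0)"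
    using DERIV_chain'[OF dpoly DERIV_ln[of "m + 2 * 0 * A + 0\<^sup>2 * N q"]] mpos by simp
  have dln2: "((\<lambda>s. ln (g s)) has_real_derivative inverse m * G) (at 0)"
    using DERIV_chain'[OF dg DERIV_ln[of "g 0"]] mpos g0 by simp
  have dpsi: "(\<psi> has_real_derivative (\<alpha> + \<beta>) * (inverse m * (2 * A)) - 2 * (inverse m * G)) (at 0)"
    unfolding \<psi>_def by (intro DERIV_diff DERIV_cmult dln1 dln2)
  have "(\<alpha> + \<beta>) * (inverse m * (2 * A)) - 2 * (inverse m * G) = 0"
  proof (rule DERIV_local_min[OF dpsi d(1)], intro allI impI)
    fix y :: real assume y: "\<bar>0 - y\<bar> < d"
    show "\<psi> 0 \<le> \<psi> y"
    proof (cases "y = 0")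
      case True then show ?thesis by simp
    next
      case False
      then have "g y > 0" using d(2)[of y] y by (simp add: dist_real_def)
      from ineq[OF this] show ?thesis unfolding \<psi>_def Nf g0 by simp
    qed
  qed
  moreover have "(\<alpha> + \<beta>) * (inverse m * (2 * A)) - 2 * (inverse m * G) = (2 * inverse m) * ((\<alpha> + \<beta>) * A - G)"
    by (simp add: algebra_simps)
  ultimately have "(2 * inverse m) * ((\<alpha> + \<beta>) * A - G) = 0" by simp
  moreover have "2 * inverse m \<noteq> 0" using mpos by simp
  ultimately have "(\<alpha> + \<beta>) * A - G = 0" by simp
  then have "(\<alpha> + \<beta>) * A = G" by simp
  then show ?thesis unfolding J_deriv_split A_def[symmetric] G_def[symmetric]
    using al be by (simp add: field_simps)
qed

end

theorem theorem1p1: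
  fixes w :: "'v \<Rightarrow> 'v \<Rightarrow> real" and \<mu> a b :: "'v \<Rightarrow> real"
    and \<alpha> \<beta> lam :: real
  assumes "weighted_graph w" and "locally_finite w" and "connected_graph w"
    and "\<exists>\<mu>_min>0. \<forall>x. \<mu> x \<ge> \<mu>_min"
    and "\<alpha> > 1" and "\<beta> > 1"
    and "cond_A1 w a b" and "cond_A2 w a b"
    and "lam > 0"
  shows "\<exists>p. weak_solution w \<mu> a b lam \<alpha> \<beta> p \<and> p \<in> nehari w \<mu> a b lam \<alpha> \<beta> \<and>
             J_lambda w \<mu> a b lam \<alpha> \<beta> p = c_nehari w \<mu> a b lam \<alpha> \<beta>"
proof -
  obtain m0 where m0: "m0 > 0" "\<And>x. \<mu> x \<ge> m0" using assms(4) by auto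
  have ab: "\<And>x. a x \<ge> 0" "\<And>x. b x \<ge> 0" using assms(7) unfolding cond_A1_def by auto
  interpret gsetup w \<mu> a b lam \<alpha> \<beta> m0
    using assms m0 ab by unfold_locales auto
  obtain p where pNE: "p \<in> NE" and pc: "Jv p = c_nehari w \<mu> a b lam \<alpha> \<beta>"
    using exists_minimizer by blast
  have Jnn: "Jv r \<ge> 0" if "r \<in> NE" for r
  proof -
    have "1/2 - 1/(\<alpha> + \<beta>) \<ge> 0" using assms(5,6) by (simp add: field_simps)
    then show ?thesis using J_nehari[OF that] N_nonneg[of r] by simp
  qed
  have bdd: "bdd_below (Jv ` NE)" using Jnn by (intro bdd_belowI2) auto
  have pmin: "Jv p \<le> Jv r" if "r \<in> NE" for r
    unfolding pc c_nehari_def by (rule cInf_lower) (use that bdd in auto)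
  have hp: "p \<in> H_lambda w \<mu> a b lam" using pNE unfolding nehari_def by auto
  have "weak_solution w \<mu> a b lam \<alpha> \<beta> p"
    unfolding weak_solution_def
  proof (intro conjI ballI)
    show "p \<in> H_lambda w \<mu> a b lam" by (rule hp)
    fix q assume "q \<in> H_lambda w \<mu> a b lam"
    then have "Hs q" using H_iff by simp
    then show "J_deriv w \<mu> a b lam \<alpha> \<beta> p q = 0" using critical[OF pNE pmin] by blast
  qed
  then show ?thesis using pNE pc by blast
qed

end
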